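(* Let $k$ be a positive integer. A graph $G$ belongs to $\mathcal{F}_k$ if and only if $G=G_1*_k G_2$ where, for each $i=1,2$, either $G_i=K_1$ or $G_i$ is uniformly dense with density $k$.
   Context: Graphs are finite, loopless, possibly with multiple edges. $\kappa'(G)$ is the edge connectivity; $\tau(G)$ is the maximum number of edge-disjoint spanning trees of a connected graph $G$. $\omega(G)$ is the number of components. For a nontrivial graph $G$, $d(G)=\frac{|E(G)|}{|V(G)|-\omega(G)}$ and $\gamma(G)=\max d(H)$ over subgraphs $H$ with nonzero denominator; $G$ is uniformly dense with density $k$ if $d(G)=\gamma(G)=k$. For vertex-disjoint connected graphs $G_1,G_2$ and a set $K$ of $k$ edges each having one end in $V(G_1)$ and the other in $V(G_2)$, the $k$-edge-join $G_1*_k G_2$ is the graph with vertex set $V(G_1)\cup V(G_2)$ and edge set $E(G_1)\cup E(G_2)\cup K$. For $n>1$, $\mathcal{F}_{k,n}$ is the set of graphs $G$ on $n$ vertices with $\kappa'(G)=\tau(G)=k$ whose number of edges is minimum among all graphs on $n$ vertices with $\kappa'=\tau=k$; $\mathcal{F}_k=\bigcup_{n>1}\mathcal{F}_{k,n}$. *)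

theory Defs
  imports Complex_Main "HOL-Library.Multiset"
begin

text \<open>Parallel edges are repeated elements of the multiset.\<close>

definition mgraph :: "'a set \<Rightarrow> 'a set multiset \<Rightarrow> bool" where
  "mgraph V E \<longleftrightarrow> finite V \<and> (\<forall>e\<in>#E. e \<subseteq> V \<and> card e = 2)"

definition adj :: "'a set multiset \<Rightarrow> ('a \<times> 'a) set" where
  "adj E = {(u, v). {u, v} \<in># E}"

definition connected_mg :: "'a set \<Rightarrow> 'a set multiset \<Rightarrow> bool" where
  "connected_mg V E \<longleftrightarrow> V \<noteq> {} \<and> (\<forall>u\<in>V. \<forall>v\<in>V. (u, v) \<in> (adj E)\<^sup>*)"

definition comp_rel :: "'a set \<Rightarrow> 'a set multiset \<Rightarrow> ('a \<times> 'a) set" where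
  "comp_rel V E = {(u, v). u \<in> V \<and> v \<in> V \<and> (u, v) \<in> (adj E)\<^sup>*}"

definition num_comps :: "'a set \<Rightarrow> 'a set multiset \<Rightarrow> nat" where
  "num_comps V E = card (V // comp_rel V E)"

text \<open>Edge connectivity \<kappa>'(G): least number of edges whose removal disconnects G
(meaningful for graphs with at least two vertices).\<close>
definition edge_conn :: "'a set \<Rightarrow> 'a set multiset \<Rightarrow> nat" where
  "edge_conn V E = (LEAST m. \<exists>F. F \<subseteq># E \<and> size F = m \<and> \<not> connected_mg V (E - F))"

definition spanning_tree :: "'a set \<Rightarrow> 'a set multiset \<Rightarrow> 'a set multiset \<Rightarrow> bool" where
  "spanning_tree V E T \<longleftrightarrow> T \<subseteq># E \<and> connected_mg V T \<and>
     (\<forall>e\<in>#T. \<not> connected_mg V (T - {#e#}))"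

definition has_disjoint_trees :: "'a set \<Rightarrow> 'a set multiset \<Rightarrow> nat \<Rightarrow> bool" where
  "has_disjoint_trees V E k \<longleftrightarrow>
     (\<exists>Ts :: nat \<Rightarrow> 'a set multiset. (\<forall>i<k. spanning_tree V E (Ts i)) \<and> (\<Sum>i<k. Ts i) \<subseteq># E)"

definition tree_pack :: "'a set \<Rightarrow> 'a set multiset \<Rightarrow> nat" where
  "tree_pack V E = (GREATEST k. has_disjoint_trees V E k)"

definition dens :: "'a set \<Rightarrow> 'a set multiset \<Rightarrow> real" where
  "dens V E = real (size E) / (real (card V) - real (num_comps V E))"

definition subgraph :: "'a set \<Rightarrow> 'a set multiset \<Rightarrow> 'a set \<Rightarrow> 'a set multiset \<Rightarrow> bool" where
  "subgraph V' E' V E \<longleftrightarrow> V' \<subseteq> V \<and> E' \<subseteq># E \<and> (\<forall>e\<in>#E'. e \<subseteq> V')"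

definition gamma :: "'a set \<Rightarrow> 'a set multiset \<Rightarrow> real" where
  "gamma V E = Max {dens V' E' | V' E'. subgraph V' E' V E \<and>
                     real (card V') - real (num_comps V' E') \<noteq> 0}"

definition uniformly_dense :: "real \<Rightarrow> 'a set \<Rightarrow> 'a set multiset \<Rightarrow> bool" where
  "uniformly_dense k V E \<longleftrightarrow> dens V E = k \<and> gamma V E = k"

definition is_edge_join ::
  "'a set \<Rightarrow> 'a set multiset \<Rightarrow> nat \<Rightarrow> 'a set \<Rightarrow> 'a set multiset \<Rightarrow> 'a set \<Rightarrow> 'a set multiset \<Rightarrow> bool" where
  "is_edge_join V E k V1 E1 V2 E2 \<longleftrightarrow>
     mgraph V1 E1 \<and> mgraph V2 E2 \<and> connected_mg V1 E1 \<and> connected_mg V2 E2 \<and> V1 \<inter> V2 = {} \<and>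
     (\<exists>K. size K = k \<and> (\<forall>e\<in>#K. \<exists>u\<in>V1. \<exists>v\<in>V2. e = {u, v}) \<and>
          V = V1 \<union> V2 \<and> E = E1 + E2 + K)"

definition is_K1 :: "'a set \<Rightarrow> 'a set multiset \<Rightarrow> bool" where
  "is_K1 V E \<longleftrightarrow> card V = 1 \<and> E = {#}"

text \<open>\<F>_{k,n} and \<F>_k.  Competitors range over graphs with the same vertex type,
which is no restriction (any graph on n vertices has an isomorphic copy on V).\<close>
definition in_Fkn :: "nat \<Rightarrow> nat \<Rightarrow> 'a set \<Rightarrow> 'a set multiset \<Rightarrow> bool" where
  "in_Fkn k n V E \<longleftrightarrow> n > 1 \<and> mgraph V E \<and> card V = n \<and> edge_conn V E = k \<and> tree_pack V E = k \<and>
     (\<forall>(V' :: 'a set) E'. mgraph V' E' \<and> card V' = n \<and> edge_conn V' E' = k \<and> tree_pack V' E' = k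
        \<longrightarrow> size E \<le> size E')"

definition in_Fk :: "nat \<Rightarrow> 'a set \<Rightarrow> 'a set multiset \<Rightarrow> bool" where
  "in_Fk k V E \<longleftrightarrow> (\<exists>n>1. in_Fkn k n V E)"

end

theory Submission
  imports Defs
begin


abbreviation cn :: "'a set multiset \<Rightarrow> ('a\<times>'a) set" where "cn E \<equiv> (adj E)\<^sup>*"

lemma adj_sym: "(u,v) \<in> adj E \<Longrightarrow> (v,u) \<in> adj E"
  by (simp add: adj_def insert_commute)

lemma cn_sym: "(u,v) \<in> cn E \<Longrightarrow> (v,u) \<in> cn E"
proof (induction rule: rtrancl_induct)
  case base then show ?case by simp
next
  case (step y z)
  then show ?case by (meson adj_sym converse_rtrancl_into_rtrancl)
qed

lemma cn_trans: "(u,v) \<in> cn E \<Longrightarrow> (v,w) \<in> cn E \<Longrightarrow> (u,w) \<in> cn E"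
  by (rule rtrancl_trans)

lemma adj_mono: "E \<subseteq># E' \<Longrightarrow> adj E \<subseteq> adj E'"
  by (auto simp: adj_def dest: mset_subset_eqD)

lemma cn_mono: "E \<subseteq># E' \<Longrightarrow> (u,v) \<in> cn E \<Longrightarrow> (u,v) \<in> cn E'"
  using adj_mono rtrancl_mono by blast

lemma adj_add: "adj (add_mset e E) = adj E \<union> {(u,v). e = {u,v}}"
  by (auto simp: adj_def)

lemma cn_edge: "{u,v} \<in># E \<Longrightarrow> (u,v) \<in> cn E"
  by (auto simp: adj_def)

lemma cn_add: "(x,z) \<in> cn (add_mset {a,b} E) \<longleftrightarrow>
   (x,z)\<in>cn E \<or> ((x,a)\<in>cn E \<and> (b,z)\<in>cn E) \<or> ((x,b)\<in>cn E \<and> (a,z)\<in>cn E)"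
proof
  assume "(x,z) \<in> cn (add_mset {a,b} E)"
  then show "(x,z)\<in>cn E \<or> ((x,a)\<in>cn E \<and> (b,z)\<in>cn E) \<or> ((x,b)\<in>cn E \<and> (a,z)\<in>cn E)"
  proof (induction rule: rtrancl_induct)
    case base then show ?case by simp
  next
    case (step y z)
    from step(2) have "(y,z) \<in> adj E \<or> {a,b} = {y,z}" by (simp add: adj_add)
    then show ?case
    proof
      assume "(y,z) \<in> adj E"
      then have "(y,z) \<in> cn E" by blast
      with step(3) show ?thesis by (meson cn_trans)
    next
      assume "{a,b} = {y,z}"
      then have "(y = a \<and> z = b) \<or> (y = b \<and> z = a)" by (auto simp: doubleton_eq_iff)
      with step(3) show ?thesis by (meson cn_trans cn_sym rtrancl.rtrancl_refl)
    qed
  qed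
next
  have s: "E \<subseteq># add_mset {a,b} E" by simp
  have ab: "(a,b) \<in> cn (add_mset {a,b} E)" "(b,a) \<in> cn (add_mset {a,b} E)"
    by (simp_all add: cn_edge cn_sym)
  assume "(x,z)\<in>cn E \<or> ((x,a)\<in>cn E \<and> (b,z)\<in>cn E) \<or> ((x,b)\<in>cn E \<and> (a,z)\<in>cn E)"
  moreover have m: "\<And>p q. (p,q)\<in>cn E \<Longrightarrow> (p,q) \<in> cn (add_mset {a,b} E)"
    using cn_mono[OF s] by blast
  ultimately show "(x,z) \<in> cn (add_mset {a,b} E)"
  proof (elim disjE conjE)
    assume "(x,z) \<in> cn E" then show ?thesis by (rule m)
  next
    assume "(x,a) \<in> cn E" "(b,z) \<in> cn E"
    then show ?thesis using rtrancl_trans[OF rtrancl_trans[OF m ab(1)] m] by blast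
  next
    assume "(x,b) \<in> cn E" "(a,z) \<in> cn E"
    then show ?thesis using rtrancl_trans[OF rtrancl_trans[OF m ab(2)] m] by blast
  qed
qed

lemma equiv_comp: "equiv V (comp_rel V E)"
proof -
  have "refl_on V (comp_rel V E)" unfolding refl_on_def comp_rel_def by auto
  moreover have "comp_rel V E \<subseteq> V \<times> V" unfolding comp_rel_def by auto
  moreover have "sym (comp_rel V E)" unfolding sym_def comp_rel_def by (auto intro: cn_sym)
  moreover have "trans (comp_rel V E)" unfolding trans_def comp_rel_def by (auto intro: cn_trans)
  ultimately show ?thesis by (simp add: equiv_def)
qed


definition edges_in :: "'a set \<Rightarrow> 'a set multiset \<Rightarrow> bool" where
  "edges_in V E \<longleftrightarrow> (\<forall>e\<in>#E. \<exists>a\<in>V. \<exists>b\<in>V. a \<noteq> b \<and> e = {a,b})"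

lemma edges_in_sub: assumes "edges_in V E" "F \<subseteq># E" shows "edges_in V F"
  unfolding edges_in_def
proof
  fix e assume "e \<in># F"
  then have "e \<in># E" by (rule mset_subset_eqD[OF assms(2)])
  then show "\<exists>a\<in>V. \<exists>b\<in>V. a \<noteq> b \<and> e = {a, b}" using assms(1) unfolding edges_in_def by blast
qed

lemma edges_in_add[simp]: "edges_in V (add_mset e E) \<longleftrightarrow> (\<exists>a\<in>V. \<exists>b\<in>V. a \<noteq> b \<and> e = {a,b}) \<and> edges_in V E"
  unfolding edges_in_def by auto

lemma edges_in_plus[simp]: "edges_in V (E + F) \<longleftrightarrow> edges_in V E \<and> edges_in V F"
  unfolding edges_in_def by auto

lemma edges_in_empty[simp]: "edges_in V {#}"
  unfolding edges_in_def by auto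

lemma mgraph_edges_in: "mgraph V E \<Longrightarrow> edges_in V E"
  unfolding mgraph_def edges_in_def
proof (intro ballI)
  fix e assume h: "finite V \<and> (\<forall>e\<in>#E. e \<subseteq> V \<and> card e = 2)" "e \<in># E"
  then have "e \<subseteq> V" "card e = 2" by auto
  then obtain a b where "e = {a,b}" "a \<noteq> b" by (auto simp: card_2_iff)
  then show "\<exists>a\<in>V. \<exists>b\<in>V. a \<noteq> b \<and> e = {a, b}" using \<open>e \<subseteq> V\<close> by auto
qed

lemma edges_in_mgraph: "finite V \<Longrightarrow> edges_in V E \<Longrightarrow> mgraph V E"
  unfolding mgraph_def edges_in_def by auto

lemma comp_rel_iff: "(x,y) \<in> comp_rel V E \<longleftrightarrow> x \<in> V \<and> y \<in> V \<and> (x,y) \<in> cn E"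
  by (simp add: comp_rel_def)

lemma quot_img: "V // R = (\<lambda>x. R``{x}) ` V"
  unfolding quotient_def by auto

lemma num_comps_img: "num_comps V E = card ((\<lambda>x. comp_rel V E``{x}) ` V)"
  unfolding num_comps_def quot_img ..

lemma num_comps_empty: "finite V \<Longrightarrow> num_comps V {#} = card V"
proof -
  assume "finite V"
  have a: "adj {#} = ({} :: ('a\<times>'a) set)" by (simp add: adj_def)
  have "\<And>x. x \<in> V \<Longrightarrow> comp_rel V {#} `` {x} = {x}"
    by (auto simp: comp_rel_def a)
  then have "(\<lambda>x. comp_rel V {#}``{x}) ` V = (\<lambda>x. {x}) ` V" by auto
  moreover have "card ((\<lambda>x. {x}) ` V) = card V"
    by (rule card_image) (auto simp: inj_on_def)
  ultimately show ?thesis by (simp add: num_comps_img)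
qed

lemma num_comps_le: "finite V \<Longrightarrow> num_comps V E \<le> card V"
  by (simp add: num_comps_img card_image_le)

lemma num_comps_pos: "finite V \<Longrightarrow> V \<noteq> {} \<Longrightarrow> 1 \<le> num_comps V E"
  by (simp add: num_comps_img Suc_le_eq card_gt_0_iff)

lemma connected_iff: "finite V \<Longrightarrow> connected_mg V E \<longleftrightarrow> V \<noteq> {} \<and> num_comps V E = 1"
proof
  assume f: "finite V" and c: "connected_mg V E"
  then have ne: "V \<noteq> {}" and all: "\<forall>u\<in>V. \<forall>v\<in>V. (u,v) \<in> cn E" by (auto simp: connected_mg_def)
  then have "\<And>x. x \<in> V \<Longrightarrow> comp_rel V E``{x} = V" by (auto simp: comp_rel_def)
  then have "(\<lambda>x. comp_rel V E``{x}) ` V = {V}" using ne by auto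
  then show "V \<noteq> {} \<and> num_comps V E = 1" using ne by (simp add: num_comps_img)
next
  assume f: "finite V" and h: "V \<noteq> {} \<and> num_comps V E = 1"
  then have "card ((\<lambda>x. comp_rel V E``{x}) ` V) = 1" by (simp add: num_comps_img)
  then obtain C where C: "(\<lambda>x. comp_rel V E``{x}) ` V = {C}"
    using card_1_singletonE by metis
  have "\<And>u v. u \<in> V \<Longrightarrow> v \<in> V \<Longrightarrow> (u,v) \<in> cn E"
  proof -
    fix u v assume uv: "u \<in> V" "v \<in> V"
    have "comp_rel V E``{u} \<in> {C}" unfolding C[symmetric] using uv(1) by (rule imageI)
    moreover have "comp_rel V E``{v} \<in> {C}" unfolding C[symmetric] using uv(2) by (rule imageI)
    ultimately have "comp_rel V E``{u} = C" "comp_rel V E``{v} = C" by simp_all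
    moreover have "v \<in> comp_rel V E``{v}" using uv by (simp add: comp_rel_def)
    ultimately show "(u,v) \<in> cn E" by (auto simp: comp_rel_def)
  qed
  then show "connected_mg V E" using h by (simp add: connected_mg_def)
qed

lemma cn3: "(x,a)\<in>cn E \<Longrightarrow> (a,b)\<in>cn E \<Longrightarrow> (b,z)\<in>cn E \<Longrightarrow> (x,z)\<in>cn E"
  by (rule cn_trans[OF cn_trans])

lemma cn_add_same: "(a,b) \<in> cn E \<Longrightarrow> cn (add_mset {a,b} E) = cn E"
proof (rule set_eqI)
  fix p assume ab: "(a,b) \<in> cn E"
  obtain x z :: 'a where p: "p = (x,z)" by fastforce
  have "(x,z) \<in> cn (add_mset {a,b} E) \<longleftrightarrow> (x,z) \<in> cn E"
    unfolding cn_add using cn3[OF _ ab] cn3[OF _ cn_sym[OF ab]] by blast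
  then show "p \<in> cn (add_mset {a,b} E) \<longleftrightarrow> p \<in> cn E" by (simp add: p)
qed

lemma num_comps_add_conn: "(a,b) \<in> cn E \<Longrightarrow> num_comps V (add_mset {a,b} E) = num_comps V E"
  by (simp add: num_comps_def comp_rel_def cn_add_same)

lemma num_comps_add_nconn:
  assumes f: "finite V" and ab: "a \<in> V" "b \<in> V" and n: "(a,b) \<notin> cn E"
  shows "num_comps V (add_mset {a,b} E) + 1 = num_comps V E"
proof -
  let ?R = "comp_rel V E" let ?R' = "comp_rel V (add_mset {a,b} E)"
  define A where "A = ?R``{a}"
  define B where "B = ?R``{b}"
  have eqv: "equiv V ?R" by (rule equiv_comp)
  have A: "A = {y\<in>V. (a,y) \<in> cn E}" by (auto simp: A_def comp_rel_def ab)
  have B: "B = {y\<in>V. (b,y) \<in> cn E}" by (auto simp: B_def comp_rel_def ab)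
  have key: "\<And>x. x \<in> V \<Longrightarrow> ?R'``{x} = (if x \<in> A \<union> B then A \<union> B else ?R``{x})"
  proof -
    fix x assume x: "x \<in> V"
    show "?R'``{x} = (if x \<in> A \<union> B then A \<union> B else ?R``{x})"
    proof (cases "x \<in> A")
      case True
      then have xa: "(a,x) \<in> cn E" by (simp add: A)
      have "?R'``{x} = A \<union> B"
      proof (rule set_eqI)
        fix y
        have "(x,y) \<in> cn (add_mset {a,b} E) \<longleftrightarrow> (a,y) \<in> cn E \<or> (b,y) \<in> cn E"
        proof
          assume "(x,y) \<in> cn (add_mset {a,b} E)"
          then consider "(x,y) \<in> cn E" | "(b,y)\<in>cn E" | "(x,b)\<in>cn E" unfolding cn_add by blast
          then show "(a,y) \<in> cn E \<or> (b,y) \<in> cn E"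
          proof cases
            case 1 then show ?thesis using cn_trans[OF xa] by blast
          next
            case 2 then show ?thesis by blast
          next
            case 3 then show ?thesis using cn_trans[OF xa] n by blast
          qed
        next
          assume "(a,y) \<in> cn E \<or> (b,y) \<in> cn E"
          then show "(x,y) \<in> cn (add_mset {a,b} E)"
            unfolding cn_add using cn_trans[OF cn_sym[OF xa]] cn_sym[OF xa] by blast
        qed
        then show "y \<in> ?R'``{x} \<longleftrightarrow> y \<in> A \<union> B"
          unfolding A B using x by (auto simp: comp_rel_def)
      qed
      then show ?thesis using True by simp
    next
      case nA: False
      show ?thesis
      proof (cases "x \<in> B")
        case True
        then have xb: "(b,x) \<in> cn E" by (simp add: B)
        have n': "(b,a) \<notin> cn E" using n cn_sym[of b a E] by auto
        have "?R'``{x} = A \<union> B"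
        proof (rule set_eqI)
          fix y
          have "(x,y) \<in> cn (add_mset {a,b} E) \<longleftrightarrow> (a,y) \<in> cn E \<or> (b,y) \<in> cn E"
          proof
            assume "(x,y) \<in> cn (add_mset {a,b} E)"
            then consider "(x,y) \<in> cn E" | "(x,a)\<in>cn E" | "(a,y)\<in>cn E" unfolding cn_add by blast
            then show "(a,y) \<in> cn E \<or> (b,y) \<in> cn E"
            proof cases
              case 1 then show ?thesis using cn_trans[OF xb] by blast
            next
              case 2 then show ?thesis using cn_trans[OF xb] n' by blast
            next
              case 3 then show ?thesis by blast
            qed
          next
            assume "(a,y) \<in> cn E \<or> (b,y) \<in> cn E"
            then show "(x,y) \<in> cn (add_mset {a,b} E)"
              unfolding cn_add using cn_trans[OF cn_sym[OF xb]] cn_sym[OF xb] by blast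
          qed
          then show "y \<in> ?R'``{x} \<longleftrightarrow> y \<in> A \<union> B"
            unfolding A B using x by (auto simp: comp_rel_def)
        qed
        then show ?thesis using True by simp
      next
        case False
        then have "(a,x) \<notin> cn E" "(b,x) \<notin> cn E" using nA x by (auto simp: A B)
        then have "(x,a) \<notin> cn E" "(x,b) \<notin> cn E" using cn_sym[of x a E] cn_sym[of x b E] by auto
        then have "?R'``{x} = ?R``{x}"
          by (auto simp: comp_rel_def cn_add)
        then show ?thesis using False nA by simp
      qed
    qed
  qed
  have aA: "a \<in> A" and bB: "b \<in> B" using ab by (auto simp: A B)
  have bA: "b \<notin> A" using n by (simp add: A)
  have AB: "A \<noteq> B" using bA bB by auto
  have clsR: "\<And>x y. x \<in> V \<Longrightarrow> y \<in> ?R``{x} \<Longrightarrow> ?R``{y} = ?R``{x}"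
    by (metis eqv equiv_class_eq_iff Image_singleton_iff)
  have img: "(\<lambda>x. ?R'``{x}) ` V = insert (A \<union> B) ((\<lambda>x. ?R``{x}) ` V - {A,B})"
  proof (rule set_eqI)
    fix C
    show "C \<in> (\<lambda>x. ?R'``{x}) ` V \<longleftrightarrow> C \<in> insert (A \<union> B) ((\<lambda>x. ?R``{x}) ` V - {A,B})"
    proof
      assume "C \<in> (\<lambda>x. ?R'``{x}) ` V"
      then obtain x where x: "x \<in> V" "C = ?R'``{x}" by auto
      show "C \<in> insert (A \<union> B) ((\<lambda>x. ?R``{x}) ` V - {A,B})"
      proof (cases "x \<in> A \<union> B")
        case True then show ?thesis using key x by simp
      next
        case False
        have xx: "x \<in> ?R``{x}" using x by (simp add: comp_rel_def)
        then have "?R``{x} \<noteq> A" "?R``{x} \<noteq> B" using False by auto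
        then show ?thesis using key x False by auto
      qed
    next
      assume "C \<in> insert (A \<union> B) ((\<lambda>x. ?R``{x}) ` V - {A,B})"
      then show "C \<in> (\<lambda>x. ?R'``{x}) ` V"
      proof
        assume "C = A \<union> B"
        then have "C = ?R'``{a}" using key[OF ab(1)] aA by simp
        then show ?thesis using ab by blast
      next
        assume "C \<in> (\<lambda>x. ?R``{x}) ` V - {A,B}"
        then obtain x where x: "x \<in> V" "C = ?R``{x}" "C \<noteq> A" "C \<noteq> B" by auto
        have "x \<notin> A"
        proof
          assume "x \<in> A" then have "?R``{x} = A" using clsR[OF ab(1)] by (simp add: A_def)
          then show False using x by simp
        qed
        moreover have "x \<notin> B"
        proof
          assume "x \<in> B" then have "?R``{x} = B" using clsR[OF ab(2)] by (simp add: B_def)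
          then show False using x by simp
        qed
        ultimately show ?thesis using key[OF x(1)] x by auto
      qed
    qed
  qed
  have fin: "finite ((\<lambda>x. ?R``{x}) ` V)" using f by simp
  have AR: "A \<in> (\<lambda>x. ?R``{x}) ` V" "B \<in> (\<lambda>x. ?R``{x}) ` V" using ab by (auto simp: A_def B_def)
  have nin: "A \<union> B \<notin> (\<lambda>x. ?R``{x}) ` V - {A,B}"
  proof
    assume "A \<union> B \<in> (\<lambda>x. ?R``{x}) ` V - {A,B}"
    then obtain x where x: "x \<in> V" "A \<union> B = ?R``{x}" "A \<union> B \<noteq> A" by auto
    then have "a \<in> ?R``{x}" using aA by auto
    then have "?R``{a} = ?R``{x}" using clsR[OF x(1)] by simp
    then have "A \<union> B = A" using x by (simp add: A_def)
    then show False using x by simp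
  qed
  have "card (insert (A \<union> B) ((\<lambda>x. ?R``{x}) ` V - {A,B})) = card ((\<lambda>x. ?R``{x}) ` V - {A,B}) + 1"
    using fin nin by simp
  also have "card ((\<lambda>x. ?R``{x}) ` V - {A,B}) = card ((\<lambda>x. ?R``{x}) ` V) - 2"
    using fin AR AB by (simp add: card_Diff_subset)
  moreover have "2 \<le> card ((\<lambda>x. ?R``{x}) ` V)"
  proof -
    have "card {A,B} = 2" using AB by simp
    moreover have "card {A,B} \<le> card ((\<lambda>x. ?R``{x}) ` V)" using AR fin by (intro card_mono) auto
    ultimately show ?thesis by simp
  qed
  ultimately show ?thesis unfolding num_comps_img img by simp
qed

lemma num_comps_add_le:
  assumes "finite V" "a \<in> V" "b \<in> V"
  shows "num_comps V (add_mset {a,b} E) \<le> num_comps V E"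
    "num_comps V E \<le> num_comps V (add_mset {a,b} E) + 1"
  using num_comps_add_conn[of a b E V] num_comps_add_nconn[OF assms, of E] by (cases "(a,b) \<in> cn E"; simp)+

lemma num_comps_mono_plus:
  assumes f: "finite V" and e: "edges_in V C"
  shows "num_comps V (A + C) \<le> num_comps V A"
  using e
proof (induction C)
  case empty then show ?case by simp
next
  case (add x C)
  then obtain a b where ab: "a \<in> V" "b \<in> V" "x = {a,b}" by auto
  have "num_comps V (A + add_mset x C) \<le> num_comps V (A + C)"
    using num_comps_add_le(1)[OF f ab(1,2), of "A + C"] ab by simp
  then show ?case using add by simp
qed

lemma num_comps_mono:
  assumes "finite V" "edges_in V B" "A \<subseteq># B"
  shows "num_comps V B \<le> num_comps V A"
proof -
  have "B = A + (B - A)" using assms(3) by simp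
  moreover have "edges_in V (B - A)" using assms(2) edges_in_sub by (metis diff_subset_eq_self)
  ultimately show ?thesis using num_comps_mono_plus[OF assms(1)] by metis
qed

lemma rank_le_size:
  assumes f: "finite V" and e: "edges_in V E"
  shows "card V \<le> size E + num_comps V E"
  using e
proof (induction E)
  case empty then show ?case using num_comps_empty[OF f] by simp
next
  case (add x E)
  then obtain a b where ab: "a \<in> V" "b \<in> V" "x = {a,b}" by auto
  show ?case using num_comps_add_le(2)[OF f ab(1,2), of E] add ab by simp
qed

definition mforest :: "'a set multiset \<Rightarrow> bool" where
  "mforest F \<longleftrightarrow> (\<forall>a b. {a,b} \<in># F \<longrightarrow> (a,b) \<notin> cn (F - {#{a,b}#}))"

lemma mforest_sub: "mforest G \<Longrightarrow> F \<subseteq># G \<Longrightarrow> mforest F"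
  unfolding mforest_def
proof (intro allI impI)
  fix a b assume G: "\<forall>a b. {a, b} \<in># G \<longrightarrow> (a, b) \<notin> cn (G - {#{a, b}#})" and FG: "F \<subseteq># G"
    and ab: "{a,b} \<in># F"
  have "{a,b} \<in># G" by (rule mset_subset_eqD[OF FG ab])
  then have nG: "(a,b) \<notin> cn (G - {#{a,b}#})" using G by blast
  have sub: "F - {#{a,b}#} \<subseteq># G - {#{a,b}#}" using FG
    by (simp add: subseteq_mset_def diff_le_mono)
  show "(a,b) \<notin> cn (F - {#{a,b}#})"
  proof
    assume "(a,b) \<in> cn (F - {#{a,b}#})"
    then have "(a,b) \<in> cn (G - {#{a,b}#})" by (rule cn_mono[OF sub])
    with nG show False by simp
  qed
qed


lemma mforest_addD:
  assumes "mforest (add_mset {a,b} F)"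
  shows "mforest F" "(a,b) \<notin> cn F"
proof -
  show "mforest F" by (rule mforest_sub[OF assms]) simp
  have "{a,b} \<in># add_mset {a,b} F" by simp
  then show "(a,b) \<notin> cn F" using assms unfolding mforest_def by (metis add_mset_remove_trivial)
qed

lemma mforest_addI:
  assumes f: "mforest F" and n: "(a,b) \<notin> cn F"
  shows "mforest (add_mset {a,b} F)"
  unfolding mforest_def
proof (intro allI impI)
  fix u v assume uv: "{u,v} \<in># add_mset {a,b} F"
  show "(u,v) \<notin> cn (add_mset {a,b} F - {#{u,v}#})"
  proof (cases "{u,v} = {a,b}")
    case True
    then have "(u = a \<and> v = b) \<or> (u = b \<and> v = a)" by (auto simp: doubleton_eq_iff)
    moreover have "add_mset {a,b} F - {#{u,v}#} = F" using True by simp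
    ultimately show ?thesis using n cn_sym[of b a F] by auto
  next
    case False
    then have uF: "{u,v} \<in># F" using uv by simp
    have eq: "add_mset {a,b} F - {#{u,v}#} = add_mset {a,b} (F - {#{u,v}#})"
      by (rule diff_union_swap2[OF uF])
    have nF: "(u,v) \<notin> cn (F - {#{u,v}#})" using f uF unfolding mforest_def by blast
    have uvF: "(u,v) \<in> cn F" using uF by (rule cn_edge)
    have sub: "F - {#{u,v}#} \<subseteq># F" by simp
    show ?thesis unfolding eq
    proof
      assume "(u,v) \<in> cn (add_mset {a,b} (F - {#{u,v}#}))"
      then consider "(u,v) \<in> cn (F - {#{u,v}#})"
        | "(u,a) \<in> cn (F - {#{u,v}#})" "(b,v) \<in> cn (F - {#{u,v}#})"
        | "(u,b) \<in> cn (F - {#{u,v}#})" "(a,v) \<in> cn (F - {#{u,v}#})"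
        unfolding cn_add by blast
      then show False
      proof cases
        case 1 then show ?thesis using nF by simp
      next
        case 2
        then have h1: "(u,a) \<in> cn F" and h2: "(b,v) \<in> cn F" using cn_mono[OF sub] by auto
        have "(a,b) \<in> cn F" by (rule cn3[OF cn_sym[OF h1] uvF cn_sym[OF h2]])
        then show ?thesis using n by simp
      next
        case 3
        then have h1: "(u,b) \<in> cn F" and h2: "(a,v) \<in> cn F" using cn_mono[OF sub] by auto
        have "(a,b) \<in> cn F" by (rule cn3[OF h2 cn_sym[OF uvF] h1])
        then show ?thesis using n by simp
      qed
    qed
  qed
qed

lemma forest_count:
  assumes f: "finite V" and e: "edges_in V F" and m: "mforest F"
  shows "size F + num_comps V F = card V"
  using e m
proof (induction F)
  case empty then show ?case using num_comps_empty[OF f] by simp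
next
  case (add x F)
  then obtain a b where ab: "a \<in> V" "b \<in> V" "x = {a,b}" by auto
  have "mforest (add_mset {a,b} F)" using add.prems ab by simp
  note mf = mforest_addD[OF this]
  have "num_comps V (add_mset {a,b} F) + 1 = num_comps V F"
    by (rule num_comps_add_nconn[OF f ab(1,2) mf(2)])
  then show ?case using add.IH add.prems mf ab by simp
qed

lemma conn_num: "finite V \<Longrightarrow> connected_mg V E \<Longrightarrow> num_comps V E = 1"
  using connected_iff by blast

lemma conn_size: "finite V \<Longrightarrow> edges_in V T \<Longrightarrow> connected_mg V T \<Longrightarrow> card V \<le> size T + 1"
  using rank_le_size conn_num by fastforce

lemma st_forest: assumes st: "spanning_tree V E T" shows "mforest T"
  unfolding mforest_def
proof (intro allI impI notI)
  fix a b assume ab: "{a,b} \<in># T" and h: "(a,b) \<in> cn (T - {#{a,b}#})"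
  have T: "T = add_mset {a,b} (T - {#{a,b}#})" using ab by simp
  have c: "connected_mg V T" using st by (simp add: spanning_tree_def)
  have "connected_mg V (T - {#{a,b}#})"
    unfolding connected_mg_def
  proof (intro conjI ballI)
    show "V \<noteq> {}" using c by (simp add: connected_mg_def)
  next
    fix u v assume "u \<in> V" "v \<in> V"
    then have "(u,v) \<in> cn T" using c by (simp add: connected_mg_def)
    then have "(u,v) \<in> cn (add_mset {a,b} (T - {#{a,b}#}))" using T by simp
    then consider "(u,v) \<in> cn (T - {#{a,b}#})"
      | "(u,a) \<in> cn (T - {#{a,b}#})" "(b,v) \<in> cn (T - {#{a,b}#})"
      | "(u,b) \<in> cn (T - {#{a,b}#})" "(a,v) \<in> cn (T - {#{a,b}#})"
      unfolding cn_add by blast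
    then show "(u,v) \<in> cn (T - {#{a,b}#})"
    proof cases
      case 1 then show ?thesis .
    next
      case 2 then show ?thesis using cn3[OF _ h, of u v] by blast
    next
      case 3 then show ?thesis using cn3[OF _ cn_sym[OF h], of u v] by blast
    qed
  qed
  then show False using st ab by (simp add: spanning_tree_def)
qed

lemma st_size:
  assumes f: "finite V" and e: "edges_in V E" and st: "spanning_tree V E T"
  shows "size T + 1 = card V"
proof -
  have eT: "edges_in V T" using e st edges_in_sub by (auto simp: spanning_tree_def)
  have "num_comps V T = 1" using conn_num[OF f] st by (simp add: spanning_tree_def)
  then show ?thesis using forest_count[OF f eT st_forest[OF st]] by simp
qed

lemma st_intro:
  assumes f: "finite V" and e: "edges_in V T" and sub: "T \<subseteq># E" and c: "connected_mg V T"
    and s: "size T + 1 = card V"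
  shows "spanning_tree V E T"
  unfolding spanning_tree_def
proof (intro conjI ballI sub c notI)
  fix x assume x: "x \<in># T" and c': "connected_mg V (T - {#x#})"
  have "edges_in V (T - {#x#})" using e by (rule edges_in_sub) simp
  then have "card V \<le> size (T - {#x#}) + 1" using conn_size[OF f _ c'] by simp
  moreover have "size {#x#} \<le> size T" using x by (intro size_mset_mono) simp
  then have "size (T - {#x#}) + 1 = size T" using x by (simp add: size_Diff_submset)
  ultimately show False using s by simp
qed

lemma split_sum:
  fixes T :: "nat \<Rightarrow> 'b multiset"
  shows "E' \<subseteq># (\<Sum>i<k. T i) \<Longrightarrow> \<exists>F. (\<forall>i<k. F i \<subseteq># T i) \<and> E' = (\<Sum>i<k. F i)"
proof (induction k arbitrary: E')
  case 0 then show ?case by simp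
next
  case (Suc k)
  have "E' - T k \<subseteq># (\<Sum>i<k. T i)" using Suc.prems by (simp add: subset_eq_diff_conv add.commute)
  then obtain F where F: "\<forall>i<k. F i \<subseteq># T i" "E' - T k = (\<Sum>i<k. F i)" using Suc.IH by blast
  define F' where "F' = F(k := E' \<inter># T k)"
  have "\<forall>i<Suc k. F' i \<subseteq># T i" using F(1) by (auto simp: F'_def less_Suc_eq)
  moreover have "(\<Sum>i<Suc k. F' i) = (\<Sum>i<k. F i) + (E' \<inter># T k)"
    by (simp add: F'_def)
  moreover have "E' = (E' - T k) + (E' \<inter># T k)" by (simp add: multiset_eq_iff min_def)
  ultimately show ?case using F(2) by metis
qed

lemma le_sum_mset: "i \<in> A \<Longrightarrow> finite A \<Longrightarrow> (F i :: 'b multiset) \<subseteq># sum F A"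
  by (metis sum.remove mset_subset_eq_add_left)

lemma bound_forests:
  assumes f: "finite V'" and e: "edges_in V' E'" and sub: "E' \<subseteq># (\<Sum>i<k. T i)"
    and fo: "\<forall>i<k. mforest (T i)"
  shows "size E' \<le> k * (card V' - num_comps V' E')"
proof -
  obtain F where F: "\<forall>i<k. F i \<subseteq># T i" "E' = (\<Sum>i<k. F i)" using split_sum[OF sub] by blast
  have "\<And>i. i < k \<Longrightarrow> size (F i) \<le> card V' - num_comps V' E'"
  proof -
    fix i assume i: "i < k"
    have FE: "F i \<subseteq># E'" using F(2) le_sum_mset[of i "{..<k}" F] i by simp
    have eF: "edges_in V' (F i)" using e FE by (rule edges_in_sub)
    have mF: "mforest (F i)" using fo F(1) i mforest_sub by blast
    have "size (F i) + num_comps V' (F i) = card V'" by (rule forest_count[OF f eF mF])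
    moreover have "num_comps V' E' \<le> num_comps V' (F i)" by (rule num_comps_mono[OF f e FE])
    ultimately show "size (F i) \<le> card V' - num_comps V' E'" by simp
  qed
  then have "(\<Sum>i<k. size (F i)) \<le> (\<Sum>i<k. card V' - num_comps V' E')" by (intro sum_mono) simp
  then show ?thesis using F(2) by (simp add: size_multiset_sum)
qed


definition Mg :: "('e \<Rightarrow> 'a set) \<Rightarrow> 'e set \<Rightarrow> 'a set multiset" where
  "Mg g Y = image_mset g (mset_set Y)"

abbreviation lcn :: "('e \<Rightarrow> 'a set) \<Rightarrow> 'e set \<Rightarrow> ('a \<times> 'a) set" where
  "lcn g Y \<equiv> cn (Mg g Y)"

definition conn_in :: "('e \<Rightarrow> 'a set) \<Rightarrow> 'e set \<Rightarrow> 'e \<Rightarrow> bool" where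
  "conn_in g Y x \<longleftrightarrow> (\<exists>a b. g x = {a,b} \<and> (a,b) \<in> lcn g Y)"

definition lforest :: "('e \<Rightarrow> 'a set) \<Rightarrow> 'e set \<Rightarrow> bool" where
  "lforest g Y \<longleftrightarrow> mforest (Mg g Y)"

definition ge :: "('e \<Rightarrow> 'a set) \<Rightarrow> 'a set \<Rightarrow> 'e set \<Rightarrow> bool" where
  "ge g V X \<longleftrightarrow> (\<forall>x\<in>X. \<exists>a\<in>V. \<exists>b\<in>V. a \<noteq> b \<and> g x = {a,b})"

lemma Mg_insert: "finite Y \<Longrightarrow> y \<notin> Y \<Longrightarrow> Mg g (insert y Y) = add_mset (g y) (Mg g Y)"
  by (simp add: Mg_def)

lemma Mg_remove: "finite Y \<Longrightarrow> y \<in> Y \<Longrightarrow> Mg g (Y - {y}) = Mg g Y - {#g y#}"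
proof -
  assume f: "finite Y" and y: "y \<in> Y"
  have "Mg g Y = add_mset (g y) (Mg g (Y - {y}))"
    using Mg_insert[of "Y - {y}" y g] f y by (simp add: insert_absorb)
  then show ?thesis by simp
qed

lemma Mg_mono: "Y \<subseteq> Z \<Longrightarrow> finite Z \<Longrightarrow> Mg g Y \<subseteq># Mg g Z"
  unfolding Mg_def by (intro image_mset_subseteq_mono subset_imp_msubset_mset_set)

lemma lcn_mono: "Y \<subseteq> Z \<Longrightarrow> finite Z \<Longrightarrow> (u,v) \<in> lcn g Y \<Longrightarrow> (u,v) \<in> lcn g Z"
  by (rule cn_mono[OF Mg_mono])

lemma size_Mg: "size (Mg g Y) = card Y"
  by (simp add: Mg_def)

lemma mem_Mg: "finite Y \<Longrightarrow> e \<in># Mg g Y \<longleftrightarrow> (\<exists>y\<in>Y. e = g y)"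
  by (auto simp: Mg_def)

lemma ge_edges_in: "ge g V X \<Longrightarrow> Y \<subseteq> X \<Longrightarrow> finite Y \<Longrightarrow> edges_in V (Mg g Y)"
  unfolding ge_def edges_in_def by (auto simp: mem_Mg subset_iff)

lemma conn_in_iff: "g x = {a,b} \<Longrightarrow> conn_in g Y x \<longleftrightarrow> (a,b) \<in> lcn g Y"
proof
  assume gx: "g x = {a,b}" and "conn_in g Y x"
  then obtain a' b' where ab': "g x = {a',b'}" "(a',b') \<in> lcn g Y" by (auto simp: conn_in_def)
  then have "(a = a' \<and> b = b') \<or> (a = b' \<and> b = a')" using gx by (auto simp: doubleton_eq_iff)
  then show "(a,b) \<in> lcn g Y" using ab'(2) cn_sym[OF ab'(2)] by auto
next
  assume "g x = {a,b}" "(a,b) \<in> lcn g Y"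
  then show "conn_in g Y x" by (auto simp: conn_in_def)
qed

lemma conn_in_mono: "conn_in g Y x \<Longrightarrow> Y \<subseteq> Z \<Longrightarrow> finite Z \<Longrightarrow> conn_in g Z x"
proof -
  assume "conn_in g Y x" "Y \<subseteq> Z" "finite Z"
  then obtain a b where "g x = {a,b}" "(a,b) \<in> lcn g Y" by (auto simp: conn_in_def)
  moreover from this(2) have "(a,b) \<in> lcn g Z" by (rule lcn_mono[OF \<open>Y \<subseteq> Z\<close> \<open>finite Z\<close>])
  ultimately show "conn_in g Z x" unfolding conn_in_def by blast
qed

lemma conn_in_self: "finite Y \<Longrightarrow> x \<in> Y \<Longrightarrow> g x = {a,b} \<Longrightarrow> conn_in g Y x"
proof -
  assume "finite Y" "x \<in> Y" "g x = {a,b}"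
  then have "{a,b} \<in># Mg g Y" by (auto simp: mem_Mg)
  then have "(a,b) \<in> lcn g Y" by (rule cn_edge)
  then show ?thesis using \<open>g x = {a,b}\<close> unfolding conn_in_def by blast
qed

lemma lcn_insert:
  assumes "finite Y" "y \<notin> Y" "g y = {a,b}"
  shows "(p,q) \<in> lcn g (insert y Y) \<longleftrightarrow>
   (p,q)\<in>lcn g Y \<or> ((p,a)\<in>lcn g Y \<and> (b,q)\<in>lcn g Y) \<or> ((p,b)\<in>lcn g Y \<and> (a,q)\<in>lcn g Y)"
  using assms by (simp add: Mg_insert cn_add)

lemma lforest_sub: "lforest g Z \<Longrightarrow> Y \<subseteq> Z \<Longrightarrow> finite Z \<Longrightarrow> lforest g Y"
  unfolding lforest_def by (rule mforest_sub[OF _ Mg_mono])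

lemma lforest_insert:
  assumes "finite Y" "y \<notin> Y" "lforest g Y" "\<not> conn_in g Y y" "g y = {a,b}"
  shows "lforest g (insert y Y)"
  using assms mforest_addI[of "Mg g Y" a b] conn_in_iff[of g y a b Y]
  by (simp add: lforest_def Mg_insert)

lemma lforest_bridge:
  assumes f: "finite Y" and l: "lforest g Y" and y: "y \<in> Y"
  shows "\<not> conn_in g (Y - {y}) y"
proof
  assume "conn_in g (Y - {y}) y"
  then obtain a b where ab: "g y = {a,b}" "(a,b) \<in> lcn g (Y - {y})" by (auto simp: conn_in_def)
  have "{a,b} \<in># Mg g Y" using ab(1) y f by (auto simp: mem_Mg)
  then have "(a,b) \<notin> cn (Mg g Y - {#{a,b}#})" using l by (simp add: lforest_def mforest_def)
  then show False using ab Mg_remove[OF f y, of g] by simp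
qed

lemma cn_chain5: "(x1,x2) \<in> cn E \<Longrightarrow> (x2,x3) \<in> cn E \<Longrightarrow> (x3,x4) \<in> cn E \<Longrightarrow> (x4,x5) \<in> cn E
   \<Longrightarrow> (x5,x6) \<in> cn E \<Longrightarrow> (x1,x6) \<in> cn E"
  using cn_trans by metis

lemma two_cut:
  assumes f: "finite F" and l: "lforest g F" and yF: "y \<in> F" and y'F: "y' \<in> F" and yy: "y \<noteq> y'"
    and gy: "g y = {a,b}" and gy': "g y' = {a',b'}"
    and h1: "(u,v) \<in> lcn g (F - {y})" and h2: "(u,v) \<in> lcn g (F - {y'})"
    and h3: "(u,v) \<notin> lcn g (F - {y} - {y'})"
  shows False
proof -
  define G where "G = F - {y} - {y'}"
  have fG: "finite G" using f by (simp add: G_def)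
  have F1: "F - {y'} = insert y G" using yF yy by (auto simp: G_def)
  have F2: "F - {y} = insert y' G" using y'F yy by (auto simp: G_def)
  have yG: "y \<notin> G" "y' \<notin> G" by (auto simp: G_def)
  have nG: "(u,v) \<notin> lcn g G" using h3 by (simp add: G_def)
  from h2 have "(u,v) \<in> lcn g (insert y G)" by (simp add: F1)
  then have c1: "((u,a)\<in>lcn g G \<and> (b,v)\<in>lcn g G) \<or> ((u,b)\<in>lcn g G \<and> (a,v)\<in>lcn g G)"
    using lcn_insert[of G y g a b u v, OF fG yG(1) gy] nG by blast
  from h1 have "(u,v) \<in> lcn g (insert y' G)" by (simp add: F2)
  then have c2: "((u,a')\<in>lcn g G \<and> (b',v)\<in>lcn g G) \<or> ((u,b')\<in>lcn g G \<and> (a',v)\<in>lcn g G)"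
    using lcn_insert[of G y' g a' b' u v, OF fG yG(2) gy'] nG by blast
  have e1: "(a',b') \<in> lcn g (insert y' G)"
    using conn_in_self[of "insert y' G" y' g a' b'] fG gy' by (auto simp: conn_in_iff)
  have e': "(a',b') \<in> lcn g (insert y' G)" "(b',a') \<in> lcn g (insert y' G)"
    using e1 cn_sym[OF e1] by auto
  have sub: "G \<subseteq> insert y' G" by auto
  have m: "\<And>p q. (p,q) \<in> lcn g G \<Longrightarrow> (p,q) \<in> lcn g (insert y' G)"
    using lcn_mono[OF sub] fG by simp
  have "(a,b) \<in> lcn g (insert y' G)"
    using c1 c2
  proof (elim disjE conjE)
    assume h1: "(u,a)\<in>lcn g G" and h2: "(b,v)\<in>lcn g G" and h3: "(u,a')\<in>lcn g G" and h4: "(b',v)\<in>lcn g G"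
    show ?thesis by (rule cn_chain5[OF m[OF cn_sym[OF h1]] m[OF h3] e'(1) m[OF h4] m[OF cn_sym[OF h2]]])
  next
    assume h1: "(u,a)\<in>lcn g G" and h2: "(b,v)\<in>lcn g G" and h3: "(u,b')\<in>lcn g G" and h4: "(a',v)\<in>lcn g G"
    show ?thesis by (rule cn_chain5[OF m[OF cn_sym[OF h1]] m[OF h3] e'(2) m[OF h4] m[OF cn_sym[OF h2]]])
  next
    assume h1: "(u,b)\<in>lcn g G" and h2: "(a,v)\<in>lcn g G" and h3: "(u,a')\<in>lcn g G" and h4: "(b',v)\<in>lcn g G"
    show ?thesis by (rule cn_chain5[OF m[OF h2] m[OF cn_sym[OF h4]] e'(2) m[OF cn_sym[OF h3]] m[OF h1]])
  next
    assume h1: "(u,b)\<in>lcn g G" and h2: "(a,v)\<in>lcn g G" and h3: "(u,b')\<in>lcn g G" and h4: "(a',v)\<in>lcn g G"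
    show ?thesis by (rule cn_chain5[OF m[OF h2] m[OF cn_sym[OF h4]] e'(1) m[OF cn_sym[OF h3]] m[OF h1]])
  qed
  then have "conn_in g (F - {y}) y" using gy by (simp add: conn_in_iff F2)
  then show False using lforest_bridge[OF f l yF] by simp
qed

lemma sep_conn:
  assumes "finite F" "lforest g F" "ge g V F" "(u,v) \<in> lcn g F"
  shows "(u,v) \<in> lcn g {y\<in>F. (u,v) \<notin> lcn g (F - {y})}"
  using assms
proof (induction "card F" arbitrary: F rule: less_induct)
  case less
  show ?case
  proof (cases "\<forall>y\<in>F. (u,v) \<notin> lcn g (F - {y})")
    case True
    then have "{y\<in>F. (u,v) \<notin> lcn g (F - {y})} = F" by auto
    then show ?thesis using less.prems by simp
  next
    case False
    then obtain y where y: "y \<in> F" "(u,v) \<in> lcn g (F - {y})" by auto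
    have c: "card (F - {y}) < card F" by (rule card_Diff1_less[OF less.prems(1) y(1)])
    have lf: "lforest g (F - {y})" using lforest_sub[OF less.prems(2) _ less.prems(1)] by blast
    have gF: "ge g V (F - {y})" using less.prems(3) by (auto simp: ge_def)
    have IH: "(u,v) \<in> lcn g {y'\<in>F - {y}. (u,v) \<notin> lcn g (F - {y} - {y'})}"
      using less.hyps[OF c _ lf gF y(2)] less.prems(1) by simp
    have sub: "{y'\<in>F - {y}. (u,v) \<notin> lcn g (F - {y} - {y'})} \<subseteq> {y\<in>F. (u,v) \<notin> lcn g (F - {y})}"
    proof
      fix y' assume y': "y' \<in> {y'\<in>F - {y}. (u,v) \<notin> lcn g (F - {y} - {y'})}"
      then have y'F: "y' \<in> F" "y' \<noteq> y" "(u,v) \<notin> lcn g (F - {y} - {y'})" by auto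
      obtain a b where gy: "g y = {a,b}" using less.prems(3) y(1) by (auto simp: ge_def)
      obtain a' b' where gy': "g y' = {a',b'}" using less.prems(3) y'F(1) by (auto simp: ge_def)
      have "(u,v) \<notin> lcn g (F - {y'})"
        using two_cut[OF less.prems(1,2) y(1) y'F(1) y'F(2)[symmetric] gy gy' y(2) _ y'F(3)] by blast
      then show "y' \<in> {y\<in>F. (u,v) \<notin> lcn g (F - {y})}" using y'F by simp
    qed
    show ?thesis using lcn_mono[OF sub _ IH] less.prems(1) by simp
  qed
qed


locale nw =
  fixes g :: "'e \<Rightarrow> 'a set" and k :: nat and X0 :: "'e set" and e :: 'e
begin

definition Cl :: "('e \<Rightarrow> nat) \<Rightarrow> nat \<Rightarrow> 'e set" where
  "Cl c i = {x\<in>X0. c x = i}"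

definition pstep :: "('e \<Rightarrow> nat) \<Rightarrow> (nat \<Rightarrow> 'e) \<Rightarrow> (nat \<Rightarrow> nat) \<Rightarrow> nat \<Rightarrow> bool" where
  "pstep c f ix j \<longleftrightarrow> ix j < k \<and> f (Suc j) \<in> X0 \<and> c (f (Suc j)) = ix j \<and> (0<j \<longrightarrow> c (f j) \<noteq> ix j)
     \<and> conn_in g (Cl c (ix j)) (f j) \<and> \<not> conn_in g (Cl c (ix j) - {f (Suc j)}) (f j)"

definition prechain :: "('e \<Rightarrow> nat) \<Rightarrow> (nat \<Rightarrow> 'e) \<Rightarrow> (nat \<Rightarrow> nat) \<Rightarrow> nat \<Rightarrow> bool" where
  "prechain c f ix m \<longleftrightarrow> f 0 = e \<and> (\<forall>j<m. pstep c f ix j)"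

definition endc :: "('e \<Rightarrow> nat) \<Rightarrow> (nat \<Rightarrow> 'e) \<Rightarrow> (nat \<Rightarrow> nat) \<Rightarrow> nat \<Rightarrow> bool" where
  "endc c f ix m \<longleftrightarrow> ix m < k \<and> (0<m \<longrightarrow> c (f m) \<noteq> ix m) \<and> \<not> conn_in g (Cl c (ix m)) (f m)"

definition chain :: "('e \<Rightarrow> nat) \<Rightarrow> (nat \<Rightarrow> 'e) \<Rightarrow> (nat \<Rightarrow> nat) \<Rightarrow> nat \<Rightarrow> bool" where
  "chain c f ix m \<longleftrightarrow> prechain c f ix m \<and> endc c f ix m"

definition col_ok :: "'e set \<Rightarrow> ('e \<Rightarrow> nat) \<Rightarrow> bool" where
  "col_ok X c \<longleftrightarrow> (\<forall>x\<in>X. c x < k) \<and> (\<forall>i<k. lforest g {x\<in>X. c x = i})"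

lemma pstep_cong: "f j = f' j \<Longrightarrow> f (Suc j) = f' (Suc j) \<Longrightarrow> ix j = ix' j \<Longrightarrow> pstep c f ix j = pstep c f' ix' j"
  by (simp add: pstep_def)

lemma prechain_Suc: "prechain c f ix (Suc m) \<longleftrightarrow> prechain c f ix m \<and> pstep c f ix m"
  by (auto simp: prechain_def less_Suc_eq)

lemma prechain_trunc:
  assumes "prechain c f ix m" "j \<le> m" "\<forall>j'\<le>j. f' j' = f j'" "\<forall>j'<j. ix' j' = ix j'"
  shows "prechain c f' ix' j"
  unfolding prechain_def
proof (intro conjI allI impI)
  show "f' 0 = e" using assms by (simp add: prechain_def)
next
  fix j' assume j': "j' < j"
  have "pstep c f ix j'" using assms j' by (simp add: prechain_def)
  moreover have "pstep c f ix j' = pstep c f' ix' j'"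
    by (rule pstep_cong) (use assms j' in auto)
  ultimately show "pstep c f' ix' j'" by simp
qed

lemma prechain_mem:
  assumes "prechain c f ix m" "j \<le> m"
  shows "f j \<in> insert e X0"
proof (cases j)
  case 0 then show ?thesis using assms by (simp add: prechain_def)
next
  case (Suc j')
  then have "pstep c f ix j'" using assms by (simp add: prechain_def)
  then show ?thesis using Suc by (simp add: pstep_def)
qed

lemma prechain_pos_mem:
  assumes "prechain c f ix m" "0 < j" "j \<le> m"
  shows "f j \<in> X0"
proof -
  obtain j' where j: "j = Suc j'" using assms(2) by (cases j) auto
  then have "pstep c f ix j'" using assms by (simp add: prechain_def)
  then show ?thesis using j by (simp add: pstep_def)
qed

lemma Cl_upd:
  assumes z: "z \<in> X0"
  shows "Cl (c(z := i2)) i = (if i = i2 then insert z (Cl c i) else Cl c i - {z})"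
  using z by (auto simp: Cl_def)

lemma Cl_fin: "finite X0 \<Longrightarrow> finite (Cl c i)"
  by (simp add: Cl_def)

lemma reduce:
  assumes fin: "finite X0" and gV: "ge g V (insert e X0)"
    and ok: "col_ok X0 c" and ch: "chain c f ix (Suc n)"
    and mn: "\<forall>m'<Suc n. \<forall>f' ix'. \<not> chain c f' ix' m'"
  shows "col_ok X0 (c(f (Suc n) := ix (Suc n))) \<and> chain (c(f (Suc n) := ix (Suc n))) f ix n"
proof -
  define z where "z = f (Suc n)"
  define i1 where "i1 = ix n"
  define i2 where "i2 = ix (Suc n)"
  define c' where "c' = c(z := i2)"
  have pc: "prechain c f ix (Suc n)" and ec: "endc c f ix (Suc n)" using ch by (auto simp: chain_def)
  have ps: "\<And>j. j \<le> n \<Longrightarrow> pstep c f ix j" using pc by (simp add: prechain_def)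
  have psn: "pstep c f ix n" using ps by simp
  have zX: "z \<in> X0" and cz: "c z = i1" and i1k: "i1 < k"
    using psn by (auto simp: pstep_def z_def i1_def)
  have i2k: "i2 < k" and cz2: "c z \<noteq> i2" and nz: "\<not> conn_in g (Cl c i2) z"
    using ec by (auto simp: endc_def z_def i2_def)
  have i12: "i1 \<noteq> i2" using cz cz2 by simp
  have fn1: "conn_in g (Cl c i1) (f n)" "\<not> conn_in g (Cl c i1 - {z}) (f n)"
    using psn by (auto simp: pstep_def z_def i1_def)
  have Cl': "\<And>i. Cl c' i = (if i = i2 then insert z (Cl c i) else Cl c i - {z})"
    unfolding c'_def by (rule Cl_upd[OF zX])
  obtain za zb where gz: "g z = {za,zb}" using gV zX by (auto simp: ge_def)
  have finCl: "\<And>i. finite (Cl c i)" using fin by (rule Cl_fin)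
  have D: "\<And>j. 0 < j \<Longrightarrow> j \<le> n \<Longrightarrow> f j \<noteq> z"
  proof
    fix j assume j: "0 < j" "j \<le> n" and fj: "f j = z"
    have "chain c f (ix(j := i2)) j"
      unfolding chain_def
    proof
      show "prechain c f (ix(j := i2)) j" by (rule prechain_trunc[OF pc]) (use j in auto)
      show "endc c f (ix(j := i2)) j" using i2k cz2 nz fj j by (simp add: endc_def)
    qed
    then show False using mn j by auto
  qed
  have Sh: "\<And>j. j < n \<Longrightarrow> ix j = i1 \<Longrightarrow> conn_in g (Cl c i1 - {z}) (f j)"
  proof (rule ccontr)
    fix j assume j: "j < n" "ix j = i1" and nc: "\<not> conn_in g (Cl c i1 - {z}) (f j)"
    define f' where "f' = f(Suc j := z)"
    define ix' where "ix' = ix(Suc j := i2)"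
    have psj: "pstep c f ix j" using ps j by simp
    have "chain c f' ix' (Suc j)"
      unfolding chain_def
    proof
      have "prechain c f' ix' j" by (rule prechain_trunc[OF pc]) (use j in \<open>auto simp: f'_def ix'_def\<close>)
      moreover have "pstep c f' ix' j"
        using psj j nc zX cz i1k by (auto simp: pstep_def f'_def ix'_def)
      ultimately show "prechain c f' ix' (Suc j)" by (simp add: prechain_Suc)
      show "endc c f' ix' (Suc j)" using i2k cz2 nz by (simp add: endc_def f'_def ix'_def)
    qed
    then show False using mn j by auto
  qed
  have A: "\<And>j. j < n \<Longrightarrow> ix j = i2 \<Longrightarrow> \<not> conn_in g (insert z (Cl c i2) - {f (Suc j)}) (f j)"
  proof
    fix j assume j: "j < n" "ix j = i2" and cc: "conn_in g (insert z (Cl c i2) - {f (Suc j)}) (f j)"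
    have psj: "pstep c f ix j" using ps j by simp
    define W where "W = Cl c i2 - {f (Suc j)}"
    have zfs: "z \<noteq> f (Suc j)" using psj j cz cz2 by (auto simp: pstep_def)
    have eqW: "insert z (Cl c i2) - {f (Suc j)} = insert z W" using zfs by (auto simp: W_def)
    have zW: "z \<notin> W" using cz2 by (auto simp: W_def Cl_def)
    have finW: "finite W" using finCl by (simp add: W_def)
    have nW: "\<not> conn_in g W (f j)" and cj: "conn_in g (Cl c i2) (f j)" using psj j by (auto simp: pstep_def W_def)
    have fjm: "f j \<in> insert e X0" by (rule prechain_mem[OF pc]) (use j in auto)
    obtain p q where gfj: "g (f j) = {p,q}" using gV fjm by (auto simp: ge_def)
    have pq: "(p,q) \<in> lcn g (insert z W)" using cc eqW gfj by (simp add: conn_in_iff)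
    have npq: "(p,q) \<notin> lcn g W" using nW gfj by (simp add: conn_in_iff)
    have pqC: "(p,q) \<in> lcn g (Cl c i2)" using cj gfj by (simp add: conn_in_iff)
    have WC: "W \<subseteq> Cl c i2" by (auto simp: W_def)
    have m: "\<And>u v. (u,v) \<in> lcn g W \<Longrightarrow> (u,v) \<in> lcn g (Cl c i2)"
      by (rule lcn_mono[OF WC finCl])
    from pq npq consider "(p,za) \<in> lcn g W" "(zb,q) \<in> lcn g W" | "(p,zb) \<in> lcn g W" "(za,q) \<in> lcn g W"
      using lcn_insert[of W z g za zb p q, OF finW zW gz] by blast
    then have "(za,zb) \<in> lcn g (Cl c i2)"
    proof cases
      case 1 then show ?thesis using cn3[OF cn_sym[OF m[OF 1(1)]] pqC cn_sym[OF m[OF 1(2)]]] by simp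
    next
      case 2 then show ?thesis using cn3[OF m[OF 2(2)] cn_sym[OF pqC] m[OF 2(1)]] by simp
    qed
    then show False using nz gz by (simp add: conn_in_iff)
  qed
  have okc': "col_ok X0 c'"
    unfolding col_ok_def
  proof (intro conjI ballI allI impI)
    fix x assume "x \<in> X0" then show "c' x < k" using ok i2k by (auto simp: col_ok_def c'_def)
  next
    fix i assume i: "i < k"
    have lf: "lforest g (Cl c i)" using ok i by (simp add: col_ok_def Cl_def)
    have "lforest g (Cl c' i)"
    proof (cases "i = i2")
      case True
      have zn: "z \<notin> Cl c i2" using cz2 by (simp add: Cl_def)
      have lf2: "lforest g (Cl c i2)" using lf True by simp
      show ?thesis using Cl' True lforest_insert[OF finCl zn lf2 nz gz] by simp
    next
      case False
      then show ?thesis using Cl' lforest_sub[OF lf _ finCl] by auto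
    qed
    then show "lforest g {x\<in>X0. c' x = i}" by (simp add: Cl_def)
  qed
  have pc': "prechain c' f ix n"
    unfolding prechain_def
  proof (intro conjI allI impI)
    show "f 0 = e" using pc by (simp add: prechain_def)
  next
    fix j assume j: "j < n"
    have psj: "pstep c f ix j" using ps j by simp
    have fsj: "f (Suc j) \<noteq> z" using D[of "Suc j"] j by simp
    have fj: "0 < j \<Longrightarrow> f j \<noteq> z" using D[of j] j by simp
    have c1: "ix j < k \<and> f (Suc j) \<in> X0 \<and> c' (f (Suc j)) = ix j \<and> (0<j \<longrightarrow> c' (f j) \<noteq> ix j)"
      using psj fsj fj by (auto simp: pstep_def c'_def)
    have c2: "conn_in g (Cl c' (ix j)) (f j) \<and> \<not> conn_in g (Cl c' (ix j) - {f (Suc j)}) (f j)"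
    proof (cases "ix j = i2")
      case True
      have "conn_in g (insert z (Cl c i2)) (f j)"
        using psj True conn_in_mono[of g "Cl c i2" "f j" "insert z (Cl c i2)"] finCl by (auto simp: pstep_def)
      then show ?thesis using A[OF j True] Cl' True by simp
    next
      case False
      have C: "Cl c' (ix j) = Cl c (ix j) - {z}" using Cl' False by simp
      have "conn_in g (Cl c (ix j) - {z}) (f j)"
      proof (cases "ix j = i1")
        case True then show ?thesis using Sh[OF j] by simp
      next
        case False
        then have "Cl c (ix j) - {z} = Cl c (ix j)" using cz by (auto simp: Cl_def)
        then show ?thesis using psj by (simp add: pstep_def)
      qed
      moreover have "\<not> conn_in g (Cl c (ix j) - {z} - {f (Suc j)}) (f j)"
      proof
        assume "conn_in g (Cl c (ix j) - {z} - {f (Suc j)}) (f j)"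
        then have "conn_in g (Cl c (ix j) - {f (Suc j)}) (f j)"
          by (rule conn_in_mono) (use finCl in auto)
        then show False using psj by (simp add: pstep_def)
      qed
      ultimately show ?thesis using C by simp
    qed
    show "pstep c' f ix j" using c1 c2 by (simp add: pstep_def)
  qed
  have ec': "endc c' f ix n"
    unfolding endc_def
  proof (intro conjI impI)
    show "ix n < k" using i1k by (simp add: i1_def)
  next
    assume "0 < n"
    then have "f n \<noteq> z" "c (f n) \<noteq> ix n" using D[of n] psn by (auto simp: pstep_def)
    then show "c' (f n) \<noteq> ix n" by (simp add: c'_def)
  next
    have "Cl c' (ix n) = Cl c i1 - {z}" using Cl' i12 by (simp add: i1_def)
    then show "\<not> conn_in g (Cl c' (ix n)) (f n)" using fn1 by simp
  qed
  show ?thesis using okc' pc' ec' by (simp add: chain_def c'_def z_def i2_def)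
qed

end


context nw begin

lemma base:
  assumes fin: "finite X0" and eX: "e \<notin> X0" and gV: "ge g V (insert e X0)"
    and ok: "col_ok X0 c" and ch: "chain c f ix 0"
  shows "\<exists>c'. col_ok (insert e X0) c'"
proof -
  define c' where "c' = c(e := ix 0)"
  have f0: "f 0 = e" using ch by (simp add: chain_def prechain_def)
  have ik: "ix 0 < k" and nc: "\<not> conn_in g (Cl c (ix 0)) e" using ch f0 by (auto simp: chain_def endc_def)
  obtain a b where gab: "g e = {a,b}" using gV by (auto simp: ge_def)
  have cls: "\<And>i. {x\<in>insert e X0. c' x = i} = (if i = ix 0 then insert e (Cl c i) else Cl c i)"
    using eX by (auto simp: c'_def Cl_def)
  have "col_ok (insert e X0) c'"
    unfolding col_ok_def
  proof (intro conjI ballI allI impI)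
    fix x assume "x \<in> insert e X0" then show "c' x < k" using ok ik eX by (auto simp: c'_def col_ok_def)
  next
    fix i assume i: "i < k"
    have lf: "lforest g (Cl c i)" using ok i by (simp add: col_ok_def Cl_def)
    show "lforest g {x\<in>insert e X0. c' x = i}"
    proof (cases "i = ix 0")
      case True
      have en: "e \<notin> Cl c (ix 0)" using eX by (simp add: Cl_def)
      have lf2: "lforest g (Cl c (ix 0))" using lf True by simp
      show ?thesis using cls True lforest_insert[OF Cl_fin[OF fin] en lf2 nc gab] by simp
    next
      case False then show ?thesis using cls lf by simp
    qed
  qed
  then show ?thesis by blast
qed

lemma aug:
  assumes fin: "finite X0" and eX: "e \<notin> X0" and gV: "ge g V (insert e X0)"
  shows "col_ok X0 c \<Longrightarrow> chain c f ix m \<Longrightarrow> \<exists>c'. col_ok (insert e X0) c'"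
proof (induction m arbitrary: c f ix rule: less_induct)
  case (less m)
  define P where "P = (\<lambda>m'. \<exists>f ix. chain c f ix m')"
  have Pm: "P m" using less.prems by (auto simp: P_def)
  define m0 where "m0 = (LEAST m'. P m')"
  have Pm0: "P m0" unfolding m0_def using Pm by (rule LeastI)
  have m0m: "m0 \<le> m" unfolding m0_def using Pm by (rule Least_le)
  obtain f0 ix0 where ch0: "chain c f0 ix0 m0" using Pm0 by (auto simp: P_def)
  show ?case
  proof (cases m0)
    case 0 then show ?thesis using base[OF fin eX gV less.prems(1)] ch0 by simp
  next
    case (Suc n)
    have mn: "\<forall>m'<Suc n. \<forall>f' ix'. \<not> chain c f' ix' m'"
    proof (intro allI impI notI)
      fix m' f' ix' assume "m' < Suc n" "chain c f' ix' m'"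
      then have "P m'" "m' < m0" using Suc by (auto simp: P_def)
      then show False using not_less_Least[of m' P] by (simp add: m0_def)
    qed
    have r: "col_ok X0 (c(f0 (Suc n) := ix0 (Suc n))) \<and> chain (c(f0 (Suc n) := ix0 (Suc n))) f0 ix0 n"
      by (rule reduce[OF fin gV less.prems(1) _ mn]) (use ch0 Suc in simp)
    have "n < m" using m0m Suc by simp
    then show ?thesis using less.IH r by blast
  qed
qed

lemma noaug:
  assumes fin: "finite X0" and eX: "e \<notin> X0" and gV: "ge g V (insert e X0)" and fV: "finite V"
    and H: "\<forall>Y \<subseteq> insert e X0. card Y \<le> k * (card V - num_comps V (Mg g Y))"
    and ok: "col_ok X0 c" and na: "\<forall>m f ix. \<not> chain c f ix m"
  shows False
proof -
  have finCl: "\<And>i. finite (Cl c i)" using fin by (rule Cl_fin)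
  have cond: "\<And>f ix m i. prechain c f ix m \<Longrightarrow> (f m = e \<or> c (f m) \<noteq> i) \<Longrightarrow> 0 < m \<Longrightarrow> c (f m) \<noteq> i"
  proof -
    fix f ix m i assume p: "prechain c f ix m" "f m = e \<or> c (f m) \<noteq> i" "0 < m"
    have "f m \<in> X0" by (rule prechain_pos_mem[OF p(1) p(3)]) simp
    then show "c (f m) \<noteq> i" using p(2) eX by auto
  qed
  have R2: "\<And>f ix m i. prechain c f ix m \<Longrightarrow> i < k \<Longrightarrow> (f m = e \<or> c (f m) \<noteq> i) \<Longrightarrow> conn_in g (Cl c i) (f m)"
  proof (rule ccontr)
    fix f ix m i assume p: "prechain c f ix m" "i < k" "f m = e \<or> c (f m) \<noteq> i" and nc: "\<not> conn_in g (Cl c i) (f m)"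
    have "chain c f (ix(m := i)) m"
      unfolding chain_def
    proof
      show "prechain c f (ix(m := i)) m" by (rule prechain_trunc[OF p(1)]) auto
      show "endc c f (ix(m := i)) m" using p cond[OF p(1) p(3)] nc by (simp add: endc_def)
    qed
    then show False using na by blast
  qed
  have R3: "\<And>f ix m i y. prechain c f ix m \<Longrightarrow> i < k \<Longrightarrow> (f m = e \<or> c (f m) \<noteq> i) \<Longrightarrow> y \<in> Cl c i
      \<Longrightarrow> \<not> conn_in g (Cl c i - {y}) (f m) \<Longrightarrow> prechain c (f(Suc m := y)) (ix(m := i)) (Suc m)"
  proof -
    fix f ix m i y assume p: "prechain c f ix m" "i < k" "f m = e \<or> c (f m) \<noteq> i" "y \<in> Cl c i"
      "\<not> conn_in g (Cl c i - {y}) (f m)"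
    have "prechain c (f(Suc m := y)) (ix(m := i)) m" by (rule prechain_trunc[OF p(1)]) auto
    moreover have "pstep c (f(Suc m := y)) (ix(m := i)) m"
      using p cond[OF p(1) p(3)] R2[OF p(1-3)] by (auto simp: pstep_def Cl_def)
    ultimately show "prechain c (f(Suc m := y)) (ix(m := i)) (Suc m)" by (simp add: prechain_Suc)
  qed
  define S where "S = {x. \<exists>m f ix. prechain c f ix m \<and> f m = x}"
  have "prechain c (\<lambda>_. e) (\<lambda>_. 0) 0" by (simp add: prechain_def)
  then have eS: "e \<in> S" unfolding S_def by blast
  have SX: "S \<subseteq> insert e X0" unfolding S_def using prechain_mem by blast
  have finS: "finite S" using SX fin finite_subset by blast
  have R4: "\<And>x i. x \<in> S \<Longrightarrow> i < k \<Longrightarrow> conn_in g (Cl c i \<inter> S) x"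
  proof -
    fix x i assume xS: "x \<in> S" and i: "i < k"
    have "x \<in> insert e X0" using xS SX by blast
    then have "\<exists>a\<in>V. \<exists>b\<in>V. a \<noteq> b \<and> g x = {a,b}" using gV unfolding ge_def by blast
    then obtain a b where gx: "g x = {a,b}" by blast
    show "conn_in g (Cl c i \<inter> S) x"
    proof (cases "x \<noteq> e \<and> c x = i")
      case True
      then have "x \<in> Cl c i \<inter> S" using xS SX by (auto simp: Cl_def)
      moreover have "finite (Cl c i \<inter> S)" using finS by simp
      ultimately show ?thesis using conn_in_self[of "Cl c i \<inter> S" x g a b] gx by blast
    next
      case False
      obtain m f ix where p: "prechain c f ix m" "f m = x" using xS by (auto simp: S_def)
      have cnd: "f m = e \<or> c (f m) \<noteq> i" using False p(2) by auto
      have "conn_in g (Cl c i) x" using R2[OF p(1) i cnd] p(2) by simp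
      then have ab: "(a,b) \<in> lcn g (Cl c i)" using gx by (simp add: conn_in_iff)
      have lf: "lforest g (Cl c i)" using ok i by (simp add: col_ok_def Cl_def)
      have gC: "ge g V (Cl c i)" using gV by (auto simp: ge_def Cl_def)
      have sc: "(a,b) \<in> lcn g {y\<in>Cl c i. (a,b) \<notin> lcn g (Cl c i - {y})}"
        by (rule sep_conn[OF finCl lf gC ab])
      have sub: "{y\<in>Cl c i. (a,b) \<notin> lcn g (Cl c i - {y})} \<subseteq> Cl c i \<inter> S"
      proof
        fix y assume y: "y \<in> {y\<in>Cl c i. (a,b) \<notin> lcn g (Cl c i - {y})}"
        then have "\<not> conn_in g (Cl c i - {f m}) (f m) \<or> True" by simp
        have nc: "\<not> conn_in g (Cl c i - {y}) (f m)" using y gx p(2) by (simp add: conn_in_iff)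
        have "prechain c (f(Suc m := y)) (ix(m := i)) (Suc m)" using R3[OF p(1) i cnd _ nc] y by simp
        then have "y \<in> S" unfolding S_def by fastforce
        then show "y \<in> Cl c i \<inter> S" using y by simp
      qed
      have "(a,b) \<in> lcn g (Cl c i \<inter> S)" by (rule lcn_mono[OF sub _ sc]) (use finCl in simp)
      then show ?thesis using gx by (simp add: conn_in_iff)
    qed
  qed
  define r where "r = card V - num_comps V (Mg g S)"
  have each: "\<And>i. i < k \<Longrightarrow> card (Cl c i \<inter> S) = r"
  proof -
    fix i assume i: "i < k"
    have fCS: "finite (Cl c i \<inter> S)" using finS by simp
    have lf: "lforest g (Cl c i \<inter> S)"
      using ok i lforest_sub[of g "Cl c i" "Cl c i \<inter> S"] finCl by (auto simp: col_ok_def Cl_def)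
    have ed: "edges_in V (Mg g (Cl c i \<inter> S))" by (rule ge_edges_in[OF gV _ fCS]) (use SX in auto)
    have fc: "size (Mg g (Cl c i \<inter> S)) + num_comps V (Mg g (Cl c i \<inter> S)) = card V"
      by (rule forest_count[OF fV ed]) (use lf in \<open>simp add: lforest_def\<close>)
    have "lcn g S \<subseteq> lcn g (Cl c i \<inter> S)"
    proof (rule rtrancl_subset_rtrancl, rule subsetI)
      fix pq assume "pq \<in> adj (Mg g S)"
      then obtain p q where pq: "pq = (p,q)" "{p,q} \<in># Mg g S" by (auto simp: adj_def)
      then obtain x where x: "x \<in> S" "{p,q} = g x" using finS by (auto simp: mem_Mg)
      have "conn_in g (Cl c i \<inter> S) x" by (rule R4[OF x(1) i])
      then show "pq \<in> lcn g (Cl c i \<inter> S)" using conn_in_iff[of g x p q "Cl c i \<inter> S"] x(2) pq(1) by simp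
    qed
    moreover have "lcn g (Cl c i \<inter> S) \<subseteq> lcn g S"
      by (rule rtrancl_mono[OF adj_mono[OF Mg_mono]]) (use finS in auto)
    ultimately have "lcn g (Cl c i \<inter> S) = lcn g S" by blast
    then have "num_comps V (Mg g (Cl c i \<inter> S)) = num_comps V (Mg g S)"
      by (simp add: num_comps_def comp_rel_def)
    then show "card (Cl c i \<inter> S) = r" using fc by (simp add: size_Mg r_def)
  qed
  have Sdec: "S - {e} = (\<Union>i\<in>{..<k}. Cl c i \<inter> S)"
  proof
    show "S - {e} \<subseteq> (\<Union>i\<in>{..<k}. Cl c i \<inter> S)"
    proof
      fix x assume x: "x \<in> S - {e}"
      then have "x \<in> X0" using SX by auto
      then have "c x < k" using ok by (simp add: col_ok_def)
      then show "x \<in> (\<Union>i\<in>{..<k}. Cl c i \<inter> S)" using x \<open>x \<in> X0\<close> by (auto simp: Cl_def)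
    qed
    show "(\<Union>i\<in>{..<k}. Cl c i \<inter> S) \<subseteq> S - {e}" using eX by (auto simp: Cl_def)
  qed
  have "card (S - {e}) = (\<Sum>i<k. card (Cl c i \<inter> S))"
    unfolding Sdec by (rule card_UN_disjoint) (use finS in \<open>auto simp: Cl_def\<close>)
  also have "\<dots> = k * r" using each by simp
  finally have cS0: "card (S - {e}) = k * r" .
  have "card S > 0" using eS finS card_gt_0_iff by blast
  then have cS: "card S = k * r + 1" using cS0 eS finS by (simp add: card_Diff_singleton_if)
  have "card S \<le> k * r" using H SX by (simp add: r_def)
  then show False using cS by simp
qed

end

lemma nw_label:
  fixes g :: "'e \<Rightarrow> 'a set"
  assumes "finite X" "finite V" "ge g V X" "\<forall>Y \<subseteq> X. card Y \<le> k * (card V - num_comps V (Mg g Y))"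
  shows "\<exists>c. (\<forall>x\<in>X. c x < k) \<and> (\<forall>i<k. lforest g {x\<in>X. c x = i})"
  using assms(1,3,4)
proof (induction X rule: finite_induct)
  case empty
  have "lforest g {}" by (simp add: lforest_def Mg_def mforest_def)
  then show ?case by auto
next
  case (insert e X0)
  have gX: "ge g V X0" using insert.prems by (auto simp: ge_def)
  have HX: "\<forall>Y \<subseteq> X0. card Y \<le> k * (card V - num_comps V (Mg g Y))" using insert.prems by auto
  obtain c where c: "nw.col_ok g k X0 c" using insert.IH[OF gX HX] by (auto simp: nw.col_ok_def)
  show ?case
  proof (cases "\<exists>m f ix. nw.chain g k X0 e c f ix m")
    case True
    then obtain m f ix where "nw.chain g k X0 e c f ix m" by blast
    then obtain c' where "nw.col_ok g k (insert e X0) c'"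
      using nw.aug[OF insert.hyps(1,2) insert.prems(1) c] by blast
    then show ?thesis by (auto simp: nw.col_ok_def)
  next
    case False
    then show ?thesis using nw.noaug[OF insert.hyps(1,2) insert.prems(1) assms(2) insert.prems(2) c] by blast
  qed
qed


definition lab :: "'b multiset \<Rightarrow> ('b \<times> nat) set" where
  "lab E = {(x,j). j < count E x}"

lemma lab_finite: "finite (lab E)"
proof -
  have "lab E \<subseteq> set_mset E \<times> {..<size E}"
  proof
    fix p assume "p \<in> lab E"
    then obtain x j where p: "p = (x,j)" "j < count E x" by (auto simp: lab_def)
    have "x \<in># E"
    proof (rule ccontr)
      assume "x \<notin># E" then have "count E x = 0" by (simp add: not_in_iff)
      with p(2) show False by simp
    qed
    moreover have "j < size E" using p(2) count_le_size[of E x] by simp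
    ultimately show "p \<in> set_mset E \<times> {..<size E}" using p by simp
  qed
  then show ?thesis by (rule finite_subset) simp
qed

lemma lab_add: "lab (add_mset a E) = insert (a, count E a) (lab E)"
  by (auto simp: lab_def less_Suc_eq split: if_splits)

lemma lab_notin: "(a, count E a) \<notin> lab E"
  by (simp add: lab_def)

lemma Mg_lab: "Mg fst (lab E) = E"
proof (induction E)
  case empty then show ?case by (simp add: lab_def Mg_def)
next
  case (add a E)
  show ?case unfolding lab_add using Mg_insert[OF lab_finite lab_notin, of fst a E] add by simp
qed

lemma lab_mono: "E' \<subseteq># E \<Longrightarrow> lab E' \<subseteq> lab E"
  by (auto simp: lab_def subseteq_mset_def intro: less_le_trans)

lemma finite_submsets: "finite {E'. E' \<subseteq># (E :: 'a set multiset)}"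
proof -
  have "{E'. E' \<subseteq># E} \<subseteq> Mg fst ` Pow (lab E)"
  proof
    fix E' assume "E' \<in> {E'. E' \<subseteq># E}"
    then have "lab E' \<in> Pow (lab E)" "Mg fst (lab E') = E'" using lab_mono Mg_lab by auto
    then show "E' \<in> Mg fst ` Pow (lab E)" by (metis imageI)
  qed
  then show ?thesis by (rule finite_subset) (simp add: lab_finite)
qed

lemma Mg_sum_classes:
  fixes n :: nat and c :: "'e \<Rightarrow> nat"
  assumes "finite X"
  shows "(\<Sum>i<n. Mg g {x\<in>X. c x = i}) = Mg g {x\<in>X. c x < n}"
proof (induction n)
  case 0 then show ?case by (simp add: Mg_def)
next
  case (Suc n)
  have "{x\<in>X. c x < Suc n} = {x\<in>X. c x < n} \<union> {x\<in>X. c x = n}" by auto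
  moreover have "Mg g ({x\<in>X. c x < n} \<union> {x\<in>X. c x = n}) = Mg g {x\<in>X. c x < n} + Mg g {x\<in>X. c x = n}"
    unfolding Mg_def by (subst mset_set_Union) (use assms in auto)
  ultimately show ?case using Suc by simp
qed

lemma nw_mset:
  assumes fV: "finite V" and e: "edges_in V E"
    and H: "\<forall>E'. E' \<subseteq># E \<longrightarrow> size E' \<le> k * (card V - num_comps V E')"
  shows "\<exists>T. (\<forall>i<k. mforest (T i)) \<and> (\<Sum>i<k. T i) = E"
proof -
  define X where "X = lab E"
  have fX: "finite X" by (simp add: X_def lab_finite)
  have gV: "ge fst V X"
  proof (unfold ge_def, rule ballI)
    fix x assume "x \<in> X"
    then obtain a j where x: "x = (a,j)" "j < count E a" by (auto simp: X_def lab_def)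
    have "a \<in># E"
    proof (rule ccontr)
      assume "a \<notin># E" then have "count E a = 0" by (simp add: not_in_iff)
      with x(2) show False by simp
    qed
    then have "fst x \<in># E" using x by simp
    then show "\<exists>a\<in>V. \<exists>b\<in>V. a \<noteq> b \<and> fst x = {a, b}" using e by (auto simp: edges_in_def)
  qed
  have HX: "\<forall>Y \<subseteq> X. card Y \<le> k * (card V - num_comps V (Mg fst Y))"
  proof (intro allI impI)
    fix Y assume Y: "Y \<subseteq> X"
    have "Mg fst Y \<subseteq># E" using Mg_mono[OF Y fX, of fst] by (simp add: X_def Mg_lab)
    then have "size (Mg fst Y) \<le> k * (card V - num_comps V (Mg fst Y))" using H by blast
    then show "card Y \<le> k * (card V - num_comps V (Mg fst Y))" by (simp add: size_Mg)
  qed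
  obtain c where c: "\<forall>x\<in>X. c x < k" "\<forall>i<k. lforest fst {x\<in>X. c x = i}"
    using nw_label[OF fX fV gV HX] by blast
  define T where "T i = Mg fst {x\<in>X. c x = i}" for i
  have "(\<Sum>i<k. T i) = Mg fst {x\<in>X. c x < k}" unfolding T_def by (rule Mg_sum_classes[OF fX])
  also have "{x\<in>X. c x < k} = X" using c(1) by auto
  finally have "(\<Sum>i<k. T i) = E" by (simp add: X_def Mg_lab)
  moreover have "\<forall>i<k. mforest (T i)" using c(2) by (simp add: T_def lforest_def)
  ultimately show ?thesis by blast
qed

lemma sum_eq_each:
  fixes a :: "nat \<Rightarrow> nat"
  assumes "\<forall>i<k. a i \<le> B" "(\<Sum>i<k. a i) = k * B" "i < k"
  shows "a i = B"
proof (rule ccontr)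
  assume "a i \<noteq> B"
  then have "a i < B" using assms by (simp add: order_less_le)
  then have "(\<Sum>i<k. a i) < (\<Sum>i<k. B)"
    by (intro sum_strict_mono_ex1) (use assms in auto)
  then show False using assms by simp
qed

lemma nonempty_comps_less:
  assumes f: "finite V" and e: "edges_in V E'" and ne: "E' \<noteq> {#}"
  shows "num_comps V E' < card V"
proof -
  obtain x where x: "x \<in># E'" using ne by (auto simp: multiset_nonemptyE)
  then obtain a b where ab: "a \<in> V" "b \<in> V" "a \<noteq> b" "x = {a,b}" using e by (auto simp: edges_in_def)
  have "(a,b) \<notin> cn ({#} :: 'a set multiset)" using ab(3) by (simp add: adj_def)
  then have "num_comps V {#{a,b}#} + 1 = card V" using num_comps_add_nconn[OF f ab(1,2), of "{#}"] num_comps_empty[OF f] by simp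
  moreover have "num_comps V E' \<le> num_comps V {#{a,b}#}" by (rule num_comps_mono[OF f e]) (use x ab in simp)
  ultimately show ?thesis by simp
qed

lemma side_trees:
  assumes fV: "finite V1" and e: "edges_in V1 E1" and ne: "V1 \<noteq> {}"
    and s: "size E1 = k * (card V1 - 1)"
    and H: "\<forall>E'. E' \<subseteq># E1 \<longrightarrow> size E' \<le> k * (card V1 - num_comps V1 E')"
  shows "\<exists>T. (\<forall>i<k. connected_mg V1 (T i) \<and> size (T i) + 1 = card V1 \<and> edges_in V1 (T i)) \<and> (\<Sum>i<k. T i) = E1"
proof -
  obtain T where T: "\<forall>i<k. mforest (T i)" "(\<Sum>i<k. T i) = E1" using nw_mset[OF fV e H] by blast
  have eT: "\<And>i. i < k \<Longrightarrow> edges_in V1 (T i)"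
  proof -
    fix i assume i: "i < k"
    have "T i \<subseteq># (\<Sum>i<k. T i)" by (rule le_sum_mset) (use i in auto)
    then show "edges_in V1 (T i)" using edges_in_sub[OF e] T(2) by simp
  qed
  have fc: "\<And>i. i < k \<Longrightarrow> size (T i) + num_comps V1 (T i) = card V1"
    using forest_count[OF fV eT] T(1) by blast
  have pos: "\<And>i. 1 \<le> num_comps V1 (T i)" using num_comps_pos[OF fV ne] by blast
  have le: "\<forall>i<k. size (T i) \<le> card V1 - 1"
  proof (intro allI impI)
    fix i assume "i < k" then show "size (T i) \<le> card V1 - 1" using fc[of i] pos[of i] by linarith
  qed
  have "size (\<Sum>i<k. T i) = (\<Sum>i<k. size (T i))" by (rule size_multiset_sum)
  then have "(\<Sum>i<k. size (T i)) = k * (card V1 - 1)" using T(2) s by simp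
  then have eq: "\<And>i. i < k \<Longrightarrow> size (T i) = card V1 - 1" using sum_eq_each[OF le] by blast
  have c1: "card V1 \<ge> 1" using fV ne by (simp add: Suc_leI card_gt_0_iff)
  have "\<And>i. i < k \<Longrightarrow> num_comps V1 (T i) = 1"
  proof -
    fix i assume "i < k" then show "num_comps V1 (T i) = 1" using fc[of i] eq[of i] c1 by linarith
  qed
  then have cT: "\<And>i. i < k \<Longrightarrow> connected_mg V1 (T i)"
  proof -
    fix i assume "i < k" "\<And>i. i < k \<Longrightarrow> num_comps V1 (T i) = 1"
    then have "num_comps V1 (T i) = 1" by blast
    then show "connected_mg V1 (T i)" using connected_iff[OF fV, of "T i"] ne by blast
  qed
  have "\<forall>i<k. connected_mg V1 (T i) \<and> size (T i) + 1 = card V1 \<and> edges_in V1 (T i)"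
  proof (intro allI impI conjI)
    fix i assume i: "i < k"
    show "connected_mg V1 (T i)" by (rule cT[OF i])
    show "size (T i) + 1 = card V1" using eq[OF i] c1 by simp
    show "edges_in V1 (T i)" by (rule eT[OF i])
  qed
  then show ?thesis using T(2) by blast
qed


lemma trees_size:
  assumes f: "finite V" and e: "edges_in V E" and h: "has_disjoint_trees V E j"
  shows "j * (card V - 1) \<le> size E"
proof -
  obtain Ts where Ts: "\<forall>i<j. spanning_tree V E (Ts i)" "(\<Sum>i<j. Ts i) \<subseteq># E"
    using h by (auto simp: has_disjoint_trees_def)
  have "\<And>i. i < j \<Longrightarrow> size (Ts i) = card V - 1" using st_size[OF f e] Ts(1) by (metis add_diff_cancel_right')
  then have "(\<Sum>i<j. size (Ts i)) = j * (card V - 1)" by simp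
  moreover have "size (\<Sum>i<j. Ts i) = (\<Sum>i<j. size (Ts i))" by (rule size_multiset_sum)
  moreover have "size (\<Sum>i<j. Ts i) \<le> size E" by (rule size_mset_mono[OF Ts(2)])
  ultimately show ?thesis by simp
qed

lemma has0: "has_disjoint_trees V E 0"
  by (simp add: has_disjoint_trees_def)

lemma tree_pack_has:
  assumes f: "finite V" and c: "2 \<le> card V" and e: "edges_in V E"
  shows "has_disjoint_trees V E (tree_pack V E)"
  unfolding tree_pack_def
proof (rule GreatestI_nat[of _ 0 "size E"])
  show "has_disjoint_trees V E 0" by (rule has0)
  fix y assume hy: "has_disjoint_trees V E y"
  show "y \<le> size E"
  proof -
    from hy have "y * (card V - 1) \<le> size E" by (rule trees_size[OF f e])
    moreover have "1 \<le> card V - 1" using c by linarith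
    then have "y * 1 \<le> y * (card V - 1)" by (rule mult_le_mono2)
    ultimately show "y \<le> size E" by linarith
  qed
qed

lemma pigeon:
  fixes T :: "nat \<Rightarrow> 'b multiset"
  shows "size F < k \<Longrightarrow> \<exists>i<k. T i \<subseteq># (\<Sum>i<k. T i) - F"
proof (induction k arbitrary: F)
  case 0 then show ?case by simp
next
  case (Suc k)
  define S where "S = (\<Sum>i<k. T i)"
  have sumS: "(\<Sum>i<Suc k. T i) = S + T k" by (simp add: S_def)
  show ?case
  proof (cases "size (F - T k) < k")
    case True
    then obtain i where i: "i < k" "T i \<subseteq># S - (F - T k)" using Suc.IH unfolding S_def by blast
    have "S - (F - T k) \<subseteq># S + T k - F" unfolding subseteq_mset_def by (intro allI) (simp only: count_diff count_union)
    then show ?thesis using i sumS by (metis less_SucI subset_mset.order_trans)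
  next
    case False
    have F: "F = (F - T k) + (F \<inter># T k)" by (simp add: multiset_eq_iff min_def)
    then have "size F = size (F - T k) + size (F \<inter># T k)" by (metis size_union)
    then have "size (F \<inter># T k) = 0" using False Suc.prems by linarith
    then have dis: "F \<inter># T k = {#}" by simp
    have "T k \<subseteq># S + T k - F"
      unfolding subseteq_mset_def
    proof
      fix x
      have "min (count F x) (count (T k) x) = 0" using arg_cong[OF dis, of "\<lambda>M. count M x"] by simp
      then have "count F x = 0 \<or> count (T k) x = 0" by linarith
      then show "count (T k) x \<le> count (S + T k - F) x" by auto
    qed
    then show ?thesis using sumS by auto
  qed
qed

lemma L:
  assumes f: "finite V" and c2: "2 \<le> card V" and e: "edges_in V E"
    and h: "has_disjoint_trees V E k" and s: "size E = k * (card V - 1)"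
    and F: "F \<subseteq># E" "size F = k" "\<not> connected_mg V (E - F)"
  shows "edge_conn V E = k \<and> tree_pack V E = k"
proof
  show "tree_pack V E = k"
    unfolding tree_pack_def
  proof (rule Greatest_equality[of "has_disjoint_trees V E", OF h])
    fix y assume "has_disjoint_trees V E y"
    then have "y * (card V - 1) \<le> k * (card V - 1)" using trees_size[OF f e] s by simp
    then show "y \<le> k" using c2 by simp
  qed
  show "edge_conn V E = k"
    unfolding edge_conn_def
  proof (rule Least_equality)
    show "\<exists>F'. F' \<subseteq># E \<and> size F' = k \<and> \<not> connected_mg V (E - F')" using F by blast
  next
    fix m assume "\<exists>F'. F' \<subseteq># E \<and> size F' = m \<and> \<not> connected_mg V (E - F')"
    then obtain F' where F': "F' \<subseteq># E" "size F' = m" "\<not> connected_mg V (E - F')" by blast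
    show "k \<le> m"
    proof (rule ccontr)
      assume "\<not> k \<le> m"
      then have "size F' < k" using F' by simp
      obtain Ts where Ts: "\<forall>i<k. spanning_tree V E (Ts i)" "(\<Sum>i<k. Ts i) \<subseteq># E"
        using h by (auto simp: has_disjoint_trees_def)
      obtain i where i: "i < k" "Ts i \<subseteq># (\<Sum>i<k. Ts i) - F'" using pigeon \<open>size F' < k\<close> by blast
      have "(\<Sum>i<k. Ts i) - F' \<subseteq># E - F'" using Ts(2) by (simp add: subseteq_mset_def diff_le_mono)
      then have sub: "Ts i \<subseteq># E - F'" using i(2) by (rule subset_mset.order_trans[rotated])
      have ct: "connected_mg V (Ts i)" using Ts(1) i(1) by (simp add: spanning_tree_def)
      have "connected_mg V (E - F')" using ct cn_mono[OF sub] by (auto simp: connected_mg_def)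
      then show False using F'(3) by simp
    qed
  qed
qed

lemma isolated:
  assumes "\<forall>e\<in>#E'. v0 \<notin> e" "(u,v0) \<in> cn E'"
  shows "u = v0"
  using assms(2)
proof (cases rule: rtranclE)
  case (step y)
  then have "{y,v0} \<in># E'" by (simp add: adj_def)
  then show ?thesis using assms(1) by auto
qed simp

lemma sum_const_mset: "(\<Sum>i<k. M) = repeat_mset k (M :: 'b multiset)"
  by (induction k) (simp_all add: add.commute)

lemma in_repeat: "x \<in># repeat_mset k M \<Longrightarrow> x \<in># M"
  by (metis count_repeat_mset mult_zero_right not_in_iff)

lemma competitor:
  assumes f: "finite V" and c2: "2 \<le> card V" and k: "0 < k"
  shows "\<exists>E'. mgraph V E' \<and> edge_conn V E' = k \<and> tree_pack V E' = k \<and> size E' = k * (card V - 1)"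
proof -
  obtain c where cV: "c \<in> V" using c2 by fastforce
  have "card (V - {c}) \<ge> 1" using c2 cV f by simp
  then have "V - {c} \<noteq> {}" by (metis card.empty not_one_le_zero)
  then obtain v0 where v0: "v0 \<in> V - {c}" by blast
  define S where "S = image_mset (\<lambda>v. {c,v}) (mset_set (V - {c}))"
  define E' where "E' = repeat_mset k S"
  have fVc: "finite (V - {c})" using f by simp
  have memS: "\<And>x. x \<in># S \<longleftrightarrow> (\<exists>v\<in>V - {c}. x = {c,v})" using fVc by (auto simp: S_def)
  have eS: "edges_in V S" unfolding edges_in_def
  proof
    fix x assume "x \<in># S"
    then obtain v where "v \<in> V - {c}" "x = {c,v}" using memS by blast
    then show "\<exists>a\<in>V. \<exists>b\<in>V. a \<noteq> b \<and> x = {a, b}" using cV by blast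
  qed
  have sS: "size S + 1 = card V" using cV f c2 by (simp add: S_def)
  have SE: "S \<subseteq># E'" using k by (simp add: E'_def subseteq_mset_def)
  have eE: "edges_in V E'" unfolding edges_in_def using eS in_repeat[of _ k S] by (auto simp: E'_def edges_in_def)
  have cS: "connected_mg V S"
    unfolding connected_mg_def
  proof (intro conjI ballI)
    show "V \<noteq> {}" using cV by auto
  next
    have hub: "\<And>u. u \<in> V \<Longrightarrow> (c,u) \<in> cn S"
    proof -
      fix u assume u: "u \<in> V"
      show "(c,u) \<in> cn S"
      proof (cases "u = c")
        case True then show ?thesis by simp
      next
        case False
        then have "{c,u} \<in># S" using u memS by auto
        then show ?thesis by (rule cn_edge)
      qed
    qed
    fix u v assume "u \<in> V" "v \<in> V"
    then show "(u,v) \<in> cn S" using cn_trans[OF cn_sym[OF hub] hub] by blast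
  qed
  have st: "spanning_tree V E' S" by (rule st_intro[OF f eS SE cS sS])
  have h: "has_disjoint_trees V E' k"
    unfolding has_disjoint_trees_def
    by (rule exI[of _ "\<lambda>_. S"]) (use st in \<open>simp add: sum_const_mset E'_def\<close>)
  have "size S = card V - 1" using sS by linarith
  then have sE: "size E' = k * (card V - 1)" by (simp add: E'_def)
  define x0 where "x0 = {c,v0}"
  have x0S: "x0 \<in># S" using memS v0 by (auto simp: x0_def)
  define F where "F = repeat_mset k {#x0#}"
  have FE: "F \<subseteq># E'" using x0S by (auto simp: F_def E'_def subseteq_mset_def)
  have sF: "size F = k" by (simp add: F_def)
  have EF: "E' - F = repeat_mset k (S - {#x0#})"
    by (simp add: multiset_eq_iff F_def E'_def diff_mult_distrib2)
  have "S - {#x0#} = image_mset (\<lambda>v. {c,v}) (mset_set (V - {c} - {v0}))"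
    using Mg_remove[OF fVc v0, of "\<lambda>v. {c,v}"] by (simp add: Mg_def S_def x0_def)
  then have noiso: "\<forall>e\<in>#E' - F. v0 \<notin> e"
    using fVc v0 in_repeat[of _ k "S - {#x0#}"] by (auto simp: EF)
  have "(c,v0) \<notin> cn (E' - F)"
  proof
    assume "(c,v0) \<in> cn (E' - F)"
    then have "c = v0" by (rule isolated[OF noiso])
    then show False using v0 by simp
  qed
  then have "\<not> connected_mg V (E' - F)" using cV v0 by (auto simp: connected_mg_def)
  then have "edge_conn V E' = k \<and> tree_pack V E' = k" using L[OF f c2 eE h sE FE sF] by blast
  then show ?thesis using sE edges_in_mgraph[OF f eE] by blast
qed


lemma gamma_fin:
  assumes "finite V"
  shows "finite {dens V' E' |V' E'. subgraph V' E' V E \<and> P V' E'}"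
proof -
  have "{dens V' E' |V' E'. subgraph V' E' V E \<and> P V' E'} \<subseteq> (\<lambda>(V',E'). dens V' E') ` (Pow V \<times> {E'. E' \<subseteq># E})"
    by (auto simp: subgraph_def)
  moreover have "finite (Pow V \<times> {E'. E' \<subseteq># E})" using assms finite_submsets by blast
  ultimately show ?thesis by (rule finite_subset[OF _ finite_imageI])
qed

lemma gamma_bound:
  assumes f: "finite V" and m: "mgraph V E" and g: "gamma V E = real k" and sub: "E' \<subseteq># E"
  shows "size E' \<le> k * (card V - num_comps V E')"
proof (cases "E' = {#}")
  case True then show ?thesis by simp
next
  case False
  have eE': "edges_in V E'" using edges_in_sub[OF mgraph_edges_in[OF m] sub] .
  have lt: "num_comps V E' < card V" by (rule nonempty_comps_less[OF f eE' False])
  define d where "d = card V - num_comps V E'"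
  have dpos: "0 < d" using lt by (simp add: d_def)
  have rd: "real (card V) - real (num_comps V E') = real d" using lt by (simp add: d_def of_nat_diff)
  have sg: "subgraph V E' V E" using sub eE' by (auto simp: subgraph_def edges_in_def)
  let ?A = "{dens V' E' |V' E'. subgraph V' E' V E \<and> real (card V') - real (num_comps V' E') \<noteq> 0}"
  have "real (card V) - real (num_comps V E') \<noteq> 0" using rd dpos by simp
  then have inA: "dens V E' \<in> ?A" using sg by blast
  have "dens V E' \<le> Max ?A" by (rule Max_ge[OF gamma_fin[OF f] inA])
  then have "dens V E' \<le> real k" using g by (simp add: gamma_def)
  then have "real (size E') / real d \<le> real k" by (simp add: dens_def rd)
  then have "real (size E') \<le> real k * real d" using dpos by (simp add: divide_le_eq)
  then have "size E' \<le> k * d" by (metis of_nat_le_iff of_nat_mult)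
  then show ?thesis by (simp add: d_def)
qed

lemma side_ok:
  assumes m: "mgraph V1 E1" and c: "connected_mg V1 E1" and k: "0 < k"
    and s: "is_K1 V1 E1 \<or> uniformly_dense (real k) V1 E1"
  shows "size E1 = k * (card V1 - 1) \<and> (\<forall>E'. E' \<subseteq># E1 \<longrightarrow> size E' \<le> k * (card V1 - num_comps V1 E'))"
  using s
proof
  assume "is_K1 V1 E1"
  then show ?thesis by (auto simp: is_K1_def)
next
  assume u: "uniformly_dense (real k) V1 E1"
  have f: "finite V1" using m by (simp add: mgraph_def)
  have w: "num_comps V1 E1 = 1" using conn_num[OF f c] .
  have ne: "V1 \<noteq> {}" using c by (simp add: connected_mg_def)
  then have c1: "1 \<le> card V1" using f by (simp add: Suc_leI card_gt_0_iff)
  have d: "real (size E1) / (real (card V1) - 1) = real k" using u w by (simp add: uniformly_dense_def dens_def)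
  have c2: "card V1 \<noteq> 1"
  proof
    assume "card V1 = 1" then show False using d k by simp
  qed
  then have "real (card V1) - 1 > 0" using c1 by simp
  then have "real (size E1) = real k * (real (card V1) - 1)" using d by (simp add: divide_eq_eq)
  also have "real (card V1) - 1 = real (card V1 - 1)" using c1 by (simp add: of_nat_diff)
  finally have "size E1 = k * (card V1 - 1)" by (metis of_nat_eq_iff of_nat_mult)
  moreover have "\<forall>E'. E' \<subseteq># E1 \<longrightarrow> size E' \<le> k * (card V1 - num_comps V1 E')"
    using gamma_bound[OF f m] u by (simp add: uniformly_dense_def)
  ultimately show ?thesis by blast
qed

lemma side_back:
  assumes f: "finite X" and m: "mgraph X E1" and c: "connected_mg X E1"
    and s: "size E1 = k * (card X - 1)"
    and B: "\<And>V' E'. V' \<subseteq> X \<Longrightarrow> edges_in V' E' \<Longrightarrow> E' \<subseteq># E1 \<Longrightarrow> size E' \<le> k * (card V' - num_comps V' E')"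
  shows "is_K1 X E1 \<or> uniformly_dense (real k) X E1"
proof (cases "card X = 1")
  case True
  then have "E1 = {#}" using s by simp
  then show ?thesis using True by (simp add: is_K1_def)
next
  case False
  have ne: "X \<noteq> {}" using c by (simp add: connected_mg_def)
  then have c2: "2 \<le> card X" using f False by (metis One_nat_def Suc_1 Suc_leI card_gt_0_iff le_neq_implies_less less_Suc_eq_le not_less_eq_eq)
  have w: "num_comps X E1 = 1" using conn_num[OF f c] .
  have r1: "real (size E1) = real k * (real (card X) - 1)" using s c2 by (simp add: of_nat_diff)
  have nz: "real (card X) - 1 \<noteq> 0" using c2 by simp
  have dX: "dens X E1 = real k" unfolding dens_def w using r1 nz by simp
  let ?A = "{dens V' E' |V' E'. subgraph V' E' X E1 \<and> real (card V') - real (num_comps V' E') \<noteq> 0}"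
  have "Max ?A = real k"
  proof (rule Max_eqI)
    show "finite ?A" by (rule gamma_fin[OF f])
  next
    fix y assume "y \<in> ?A"
    then obtain V' E' where y: "y = dens V' E'" "subgraph V' E' X E1"
      "real (card V') - real (num_comps V' E') \<noteq> 0" by blast
    have V'X: "V' \<subseteq> X" and E'E: "E' \<subseteq># E1" and inV: "\<forall>e\<in>#E'. e \<subseteq> V'" using y(2) by (auto simp: subgraph_def)
    have fV': "finite V'" by (rule finite_subset[OF V'X f])
    have eE': "edges_in V' E'"
      unfolding edges_in_def
    proof
      fix e assume e: "e \<in># E'"
      then have "e \<in># E1" by (rule mset_subset_eqD[OF E'E])
      then obtain a b where ab: "a \<noteq> b" "e = {a,b}" using mgraph_edges_in[OF m] by (auto simp: edges_in_def)
      have "e \<subseteq> V'" using inV e by blast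
      then have "a \<in> V'" "b \<in> V'" using ab by auto
      then show "\<exists>a\<in>V'. \<exists>b\<in>V'. a \<noteq> b \<and> e = {a, b}" using ab by blast
    qed
    have bd: "size E' \<le> k * (card V' - num_comps V' E')" by (rule B[OF V'X eE' E'E])
    have le: "num_comps V' E' \<le> card V'" by (rule num_comps_le[OF fV'])
    define d where "d = card V' - num_comps V' E'"
    have rd: "real (card V') - real (num_comps V' E') = real d" using le by (simp add: d_def of_nat_diff)
    have dpos: "0 < d" using y(3) rd by simp
    have "real (size E') \<le> real k * real d" using bd by (metis d_def of_nat_le_iff of_nat_mult)
    then have "real (size E') / real d \<le> real k" using dpos by (simp add: divide_le_eq)
    then show "y \<le> real k" using y(1) by (simp add: dens_def rd)
  next
    have "subgraph X E1 X E1" using m by (simp add: subgraph_def mgraph_def)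
    moreover have "real (card X) - real (num_comps X E1) \<noteq> 0" using w c2 by simp
    ultimately show "real k \<in> ?A" using dX by (metis (mono_tags, lifting) mem_Collect_eq)
  qed
  then have "gamma X E1 = real k" by (simp add: gamma_def)
  then show ?thesis using dX by (simp add: uniformly_dense_def)
qed


lemma mset_nth_sum: "(\<Sum>i<length xs. {#xs ! i#}) = mset xs"
proof (induction xs)
  case Nil then show ?case by simp
next
  case (Cons x xs)
  have "(\<Sum>i<length (x # xs). {#(x # xs) ! i#}) = {#x#} + (\<Sum>i<length xs. {#xs ! i#})"
    by (simp only: length_Cons sum.lessThan_Suc_shift) simp
  then show ?case using Cons by simp
qed

lemma edges_in_mono_V: assumes "V1 \<subseteq> V" "edges_in V1 E" shows "edges_in V E"
  unfolding edges_in_def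
proof
  fix e assume "e \<in># E"
  then obtain a b where "a \<in> V1" "b \<in> V1" "a \<noteq> b" "e = {a,b}" using assms(2) unfolding edges_in_def by blast
  then show "\<exists>a\<in>V. \<exists>b\<in>V. a \<noteq> b \<and> e = {a, b}" using assms(1) by blast
qed

lemma closed_side:
  assumes e1: "\<forall>e\<in>#E1. e \<subseteq> V1" and e2: "\<forall>e\<in>#E2. e \<subseteq> V2" and dis: "V1 \<inter> V2 = {}"
    and ne: "\<forall>e\<in>#E1 + E2. e \<noteq> {}"
  shows "(u,x) \<in> cn (E1 + E2) \<Longrightarrow> u \<in> V1 \<Longrightarrow> x \<in> V1"
proof (induction rule: rtrancl_induct)
  case base then show ?case .
next
  case (step y z)
  then have yz: "{y,z} \<in># E1 + E2" by (simp add: adj_def)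
  show ?case
  proof (cases "{y,z} \<in># E1")
    case True then show ?thesis using e1 by auto
  next
    case False
    then have "{y,z} \<in># E2" using yz by simp
    then have "y \<in> V2" using e2 by auto
    then show ?thesis using step dis by auto
  qed
qed

lemma join_in_F:
  assumes k: "0 < k" and J: "is_edge_join V E k V1 E1 V2 E2"
    and s1: "is_K1 V1 E1 \<or> uniformly_dense (real k) V1 E1"
    and s2: "is_K1 V2 E2 \<or> uniformly_dense (real k) V2 E2"
  shows "in_Fk k V E"
proof -
  have m1: "mgraph V1 E1" and m2: "mgraph V2 E2" and c1: "connected_mg V1 E1" and c2: "connected_mg V2 E2"
    and dis: "V1 \<inter> V2 = {}" using J by (auto simp: is_edge_join_def)
  obtain K where sK: "size K = k" and Kc: "\<forall>e\<in>#K. \<exists>u\<in>V1. \<exists>v\<in>V2. e = {u,v}"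
    and VV: "V = V1 \<union> V2" and EE: "E = E1 + E2 + K" using J by (auto simp: is_edge_join_def)
  have f1: "finite V1" and f2: "finite V2" using m1 m2 by (auto simp: mgraph_def)
  have ne1: "V1 \<noteq> {}" and ne2: "V2 \<noteq> {}" using c1 c2 by (auto simp: connected_mg_def)
  have fV: "finite V" using f1 f2 VV by simp
  have cV: "card V = card V1 + card V2" using VV dis f1 f2 by (simp add: card_Un_disjoint)
  have n1: "1 \<le> card V1" using f1 ne1 by (simp add: Suc_leI card_gt_0_iff)
  have n2: "1 \<le> card V2" using f2 ne2 by (simp add: Suc_leI card_gt_0_iff)
  have cV2: "2 \<le> card V" using cV n1 n2 by simp
  obtain so1: "size E1 = k * (card V1 - 1)" and H1: "\<forall>E'. E' \<subseteq># E1 \<longrightarrow> size E' \<le> k * (card V1 - num_comps V1 E')"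
    using side_ok[OF m1 c1 k s1] by blast
  obtain so2: "size E2 = k * (card V2 - 1)" and H2: "\<forall>E'. E' \<subseteq># E2 \<longrightarrow> size E' \<le> k * (card V2 - num_comps V2 E')"
    using side_ok[OF m2 c2 k s2] by blast
  have ee1: "edges_in V1 E1" and ee2: "edges_in V2 E2" using m1 m2 by (auto intro: mgraph_edges_in)
  obtain T1 where T1: "\<forall>i<k. connected_mg V1 (T1 i) \<and> size (T1 i) + 1 = card V1 \<and> edges_in V1 (T1 i)"
    "(\<Sum>i<k. T1 i) = E1" using side_trees[OF f1 ee1 ne1 so1 H1] by blast
  obtain T2 where T2: "\<forall>i<k. connected_mg V2 (T2 i) \<and> size (T2 i) + 1 = card V2 \<and> edges_in V2 (T2 i)"
    "(\<Sum>i<k. T2 i) = E2" using side_trees[OF f2 ee2 ne2 so2 H2] by blast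
  obtain xs where xs: "mset xs = K" using ex_mset by blast
  have lxs: "length xs = k" using xs sK by (metis size_mset)
  define T where "T i = T1 i + T2 i + {#xs ! i#}" for i
  have sumT: "(\<Sum>i<k. T i) = E"
    unfolding T_def sum.distrib T1(2) T2(2) EE using mset_nth_sum[of xs] lxs xs by simp
  have eK: "edges_in V K"
    unfolding edges_in_def
  proof
    fix e assume "e \<in># K"
    then obtain u v where "u \<in> V1" "v \<in> V2" "e = {u,v}" using Kc by blast
    moreover then have "u \<noteq> v" using dis by auto
    ultimately show "\<exists>a\<in>V. \<exists>b\<in>V. a \<noteq> b \<and> e = {a, b}" using VV by blast
  qed
  have eE: "edges_in V E" unfolding EE using edges_in_mono_V[of V1 V E1] edges_in_mono_V[of V2 V E2] ee1 ee2 eK VV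
    by simp
  have stT: "\<And>i. i < k \<Longrightarrow> spanning_tree V E (T i)"
  proof -
    fix i assume i: "i < k"
    have xi: "xs ! i \<in># K" using i lxs xs by (metis nth_mem set_mset_mset)
    obtain a b where ab: "a \<in> V1" "b \<in> V2" "xs ! i = {a,b}" using Kc xi by blast
    have t1: "connected_mg V1 (T1 i)" "size (T1 i) + 1 = card V1" "edges_in V1 (T1 i)" using T1(1) i by auto
    have t2: "connected_mg V2 (T2 i)" "size (T2 i) + 1 = card V2" "edges_in V2 (T2 i)" using T2(1) i by auto
    have abne: "a \<noteq> b" using ab dis by auto
    have abV: "a \<in> V" "b \<in> V" using ab VV by auto
    have eT: "edges_in V (T i)" unfolding T_def
      using edges_in_mono_V[of V1 V "T1 i"] edges_in_mono_V[of V2 V "T2 i"] t1(3) t2(3) VV ab(3) abne abV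
      by simp blast
    have subE: "T i \<subseteq># E" using le_sum_mset[of i "{..<k}" T] i sumT by simp
    have sz: "size (T i) + 1 = card V" using t1(2) t2(2) cV by (simp add: T_def)
    have s1': "T1 i \<subseteq># T i" and s2': "T2 i \<subseteq># T i" by (simp_all add: T_def)
    have abT: "(a,b) \<in> cn (T i)" by (rule cn_edge) (simp add: T_def ab)
    have toall: "\<And>p. p \<in> V \<Longrightarrow> (a,p) \<in> cn (T i)"
    proof -
      fix p assume "p \<in> V"
      then consider "p \<in> V1" | "p \<in> V2" using VV by blast
      then show "(a,p) \<in> cn (T i)"
      proof cases
        case 1
        then have "(a,p) \<in> cn (T1 i)" using t1(1) ab(1) by (simp add: connected_mg_def)
        then show ?thesis by (rule cn_mono[OF s1'])
      next
        case 2
        then have "(b,p) \<in> cn (T2 i)" using t2(1) ab(2) by (simp add: connected_mg_def)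
        then have "(b,p) \<in> cn (T i)" by (rule cn_mono[OF s2'])
        then show ?thesis by (rule cn_trans[OF abT])
      qed
    qed
    have "connected_mg V (T i)"
      unfolding connected_mg_def
    proof (intro conjI ballI)
      show "V \<noteq> {}" using ne1 VV by auto
    next
      fix u v assume "u \<in> V" "v \<in> V"
      then show "(u,v) \<in> cn (T i)" using cn_trans[OF cn_sym[OF toall] toall] by blast
    qed
    then show "spanning_tree V E (T i)" by (rule st_intro[OF fV eT subE _ sz])
  qed
  have h: "has_disjoint_trees V E k"
    unfolding has_disjoint_trees_def using stT sumT by auto
  have sE: "size E = k * (card V - 1)"
  proof -
    have "size E = k * (card V1 - 1) + k * (card V2 - 1) + k" using so1 so2 sK EE by simp
    also have "\<dots> = k * ((card V1 - 1) + (card V2 - 1) + 1)" by (simp add: algebra_simps)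
    also have "(card V1 - 1) + (card V2 - 1) + 1 = card V - 1" using cV n1 n2 by simp
    finally show ?thesis .
  qed
  obtain u where u: "u \<in> V1" using ne1 by blast
  obtain v where v: "v \<in> V2" using ne2 by blast
  have EK: "E - K = E1 + E2" using EE by simp
  have e1s: "\<forall>e\<in>#E1. e \<subseteq> V1" and e2s: "\<forall>e\<in>#E2. e \<subseteq> V2" using m1 m2 by (auto simp: mgraph_def)
  have nee: "\<forall>e\<in>#E1 + E2. e \<noteq> {}" using m1 m2 by (auto simp: mgraph_def)
  have "(u,v) \<notin> cn (E1 + E2)"
  proof
    assume "(u,v) \<in> cn (E1 + E2)"
    then have "v \<in> V1" using closed_side[OF e1s e2s dis nee] u by blast
    then show False using v dis by auto
  qed
  then have nc: "\<not> connected_mg V (E - K)" using u v VV EK by (auto simp: connected_mg_def)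
  have KE: "K \<subseteq># E" using EE by simp
  have L1: "edge_conn V E = k \<and> tree_pack V E = k" by (rule L[OF fV cV2 eE h sE KE sK nc])
  have "in_Fkn k (card V) V E"
    unfolding in_Fkn_def
  proof (intro conjI allI impI)
    show "1 < card V" using cV2 by simp
    show "mgraph V E" by (rule edges_in_mgraph[OF fV eE])
    show "edge_conn V E = k" "tree_pack V E = k" using L1 by auto
  next
    fix V' :: "'a set" and E'
    assume a: "mgraph V' E' \<and> card V' = card V \<and> edge_conn V' E' = k \<and> tree_pack V' E' = k"
    have fV': "finite V'" using a by (simp add: mgraph_def)
    have eE': "edges_in V' E'" using a mgraph_edges_in by blast
    have "has_disjoint_trees V' E' (tree_pack V' E')" by (rule tree_pack_has[OF fV' _ eE']) (use a cV2 in simp)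
    then have "k * (card V' - 1) \<le> size E'" using trees_size[OF fV' eE'] a by simp
    then show "size E \<le> size E'" using sE a by simp
  qed simp
  moreover have "1 < card V" using cV2 by simp
  ultimately show ?thesis unfolding in_Fk_def by blast
qed


lemma subset_size_eq: "A \<subseteq># B \<Longrightarrow> size B \<le> size A \<Longrightarrow> A = B"
  by (metis mset_subset_size subset_mset.le_less not_le)

lemma F_decomp:
  assumes k: "0 < k" and F: "in_Fk k V E"
  shows "\<exists>V1 E1 V2 E2. is_edge_join V E k V1 E1 V2 E2 \<and>
       (is_K1 V1 E1 \<or> uniformly_dense (real k) V1 E1) \<and>
       (is_K1 V2 E2 \<or> uniformly_dense (real k) V2 E2)"
proof -
  obtain n where n: "n > 1" "in_Fkn k n V E" using F by (auto simp: in_Fk_def)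
  have mE: "mgraph V E" and cVn: "card V = n" and ec: "edge_conn V E = k" and tp: "tree_pack V E = k"
    and mini: "\<forall>(V' :: 'a set) E'. mgraph V' E' \<and> card V' = n \<and> edge_conn V' E' = k \<and> tree_pack V' E' = k
        \<longrightarrow> size E \<le> size E'" using n(2) by (auto simp: in_Fkn_def)
  have fV: "finite V" using mE by (simp add: mgraph_def)
  have eE: "edges_in V E" by (rule mgraph_edges_in[OF mE])
  have c2: "2 \<le> card V" using n cVn by simp
  obtain E0 where E0: "mgraph V E0" "edge_conn V E0 = k" "tree_pack V E0 = k" "size E0 = k * (card V - 1)"
    using competitor[OF fV c2 k] by blast
  have "size E \<le> size E0" using mini E0(1,2,3) cVn by blast
  then have sEle: "size E \<le> k * (card V - 1)" using E0(4) by simp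
  have h: "has_disjoint_trees V E k" using tree_pack_has[OF fV c2 eE] tp by simp
  obtain Ts where Ts: "\<forall>i<k. spanning_tree V E (Ts i)" "(\<Sum>i<k. Ts i) \<subseteq># E"
    using h by (auto simp: has_disjoint_trees_def)
  have "size (\<Sum>i<k. Ts i) = (\<Sum>i<k. size (Ts i))" by (rule size_multiset_sum)
  also have "\<dots> = (\<Sum>i<k. card V - 1)"
  proof (rule sum.cong)
    fix i assume "i \<in> {..<k}"
    then have "size (Ts i) + 1 = card V" using st_size[OF fV eE] Ts(1) by simp
    then show "size (Ts i) = card V - 1" by simp
  qed simp
  finally have sS: "size (\<Sum>i<k. Ts i) = k * (card V - 1)" by simp
  have sumE: "(\<Sum>i<k. Ts i) = E" by (rule subset_size_eq[OF Ts(2)]) (use sS sEle in simp)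
  have sE: "size E = k * (card V - 1)" using sS sumE by simp
  have fo: "\<forall>i<k. mforest (Ts i)" using Ts(1) st_forest by blast
  have B: "\<And>V' E'. V' \<subseteq> V \<Longrightarrow> edges_in V' E' \<Longrightarrow> E' \<subseteq># E \<Longrightarrow> size E' \<le> k * (card V' - num_comps V' E')"
  proof -
    fix V' E' assume a: "V' \<subseteq> V" "edges_in V' E'" "E' \<subseteq># E"
    have fV': "finite V'" by (rule finite_subset[OF a(1) fV])
    show "size E' \<le> k * (card V' - num_comps V' E')"
      by (rule bound_forests[OF fV' a(2) _ fo]) (use a(3) sumE in simp)
  qed
  define P where "P m = (\<exists>F. F \<subseteq># E \<and> size F = m \<and> \<not> connected_mg V (E - F))" for m
  obtain a b where ab: "a \<in> V" "b \<in> V" "a \<noteq> b"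
  proof -
    obtain a where a: "a \<in> V" using c2 by fastforce
    have "card (V - {a}) \<ge> 1" using c2 a fV by simp
    then have "V - {a} \<noteq> {}" by (metis card.empty not_one_le_zero)
    then obtain b where "b \<in> V - {a}" by blast
    then show ?thesis using a that by blast
  qed
  have "(a,b) \<notin> cn ({#} :: 'a set multiset)"
  proof
    assume "(a,b) \<in> cn ({#} :: 'a set multiset)"
    then have "a = b" using isolated[of "{#}" b a] by simp
    then show False using ab by simp
  qed
  then have "\<not> connected_mg V (E - E)" using ab by (auto simp: connected_mg_def)
  then have "P (size E)" by (auto simp: P_def)
  then have "P (edge_conn V E)" unfolding edge_conn_def P_def[symmetric] by (rule LeastI)
  then obtain Fc where Fc: "Fc \<subseteq># E" "size Fc = k" "\<not> connected_mg V (E - Fc)" using ec by (auto simp: P_def)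
  obtain u v where uv: "u \<in> V" "v \<in> V" "(u,v) \<notin> cn (E - Fc)"
    using Fc(3) ab by (auto simp: connected_mg_def)
  define X where "X = {x\<in>V. (u,x) \<in> cn (E - Fc)}"
  define Y where "Y = V - X"
  have uX: "u \<in> X" using uv by (simp add: X_def)
  have vY: "v \<in> Y" using uv by (simp add: X_def Y_def)
  have XV: "X \<subseteq> V" and YV: "Y \<subseteq> V" by (auto simp: X_def Y_def)
  have fX: "finite X" and fY: "finite Y" using fV XV YV finite_subset by auto
  have XY: "X \<inter> Y = {}" and VXY: "V = X \<union> Y" by (auto simp: Y_def X_def)
  have cXY: "card X + card Y = card V" using fX fY XY VXY by (simp add: card_Un_disjoint)
  define E1 where "E1 = filter_mset (\<lambda>e. e \<subseteq> X) E"
  define E2 where "E2 = filter_mset (\<lambda>e. \<not> e \<subseteq> X \<and> e \<subseteq> Y) E"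
  define K where "K = filter_mset (\<lambda>e. \<not> e \<subseteq> X \<and> \<not> e \<subseteq> Y) E"
  have EE: "E = E1 + E2 + K" by (auto simp: multiset_eq_iff E1_def E2_def K_def)
  have edge: "\<And>e. e \<in># E \<Longrightarrow> \<exists>a\<in>V. \<exists>b\<in>V. a \<noteq> b \<and> e = {a,b}" using eE by (auto simp: edges_in_def)
  have e1: "edges_in X E1"
    unfolding edges_in_def
  proof
    fix e assume "e \<in># E1"
    then have "e \<in># E" "e \<subseteq> X" by (auto simp: E1_def)
    then show "\<exists>a\<in>X. \<exists>b\<in>X. a \<noteq> b \<and> e = {a,b}" using edge by blast
  qed
  have e2: "edges_in Y E2"
    unfolding edges_in_def
  proof
    fix e assume "e \<in># E2"
    then have "e \<in># E" "e \<subseteq> Y" by (auto simp: E2_def)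
    then show "\<exists>a\<in>Y. \<exists>b\<in>Y. a \<noteq> b \<and> e = {a,b}" using edge by blast
  qed
  have Kc: "\<forall>e\<in>#K. \<exists>p\<in>X. \<exists>q\<in>Y. e = {p,q}"
  proof
    fix e assume "e \<in># K"
    then have eK: "e \<in># E" "\<not> e \<subseteq> X" "\<not> e \<subseteq> Y" by (auto simp: K_def)
    then obtain a b where ab: "a \<in> V" "b \<in> V" "e = {a,b}" using edge by blast
    show "\<exists>p\<in>X. \<exists>q\<in>Y. e = {p,q}"
    proof (cases "a \<in> X")
      case True
      then have "b \<notin> X" using eK ab by auto
      then have "b \<in> Y" using ab by (simp add: Y_def)
      then show ?thesis using True ab by blast
    next
      case False
      then have "a \<in> Y" using ab by (simp add: Y_def)
      then have "b \<notin> Y" using eK ab by auto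
      then have "b \<in> X" using ab by (simp add: Y_def)
      then show ?thesis using \<open>a \<in> Y\<close> ab by (metis insert_commute)
    qed
  qed
  have KF: "K \<subseteq># Fc"
    unfolding subseteq_mset_def
  proof
    fix e
    show "count K e \<le> count Fc e"
    proof (cases "e \<in># K")
      case False then show ?thesis by (simp add: not_in_iff)
    next
      case True
      then obtain p q where pq: "p \<in> X" "q \<in> Y" "e = {p,q}" using Kc by blast
      have cK: "count K e = count E e" using True by (simp add: K_def)
      show ?thesis
      proof (rule ccontr)
        assume "\<not> count K e \<le> count Fc e"
        then have lt: "count Fc e < count E e" using cK by simp
        have "e \<in># E - Fc"
        proof (rule ccontr)
          assume "e \<notin># E - Fc" then have "count (E - Fc) e = 0" by (simp add: not_in_iff)
          then show False using lt by simp
        qed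
        then have "(p,q) \<in> cn (E - Fc)" using pq by (simp add: cn_edge)
        moreover have "(u,p) \<in> cn (E - Fc)" using pq by (simp add: X_def)
        ultimately have "(u,q) \<in> cn (E - Fc)" by (rule cn_trans[rotated])
        then have "q \<in> X" using pq YV by (auto simp: X_def)
        then show False using pq XY by auto
      qed
    qed
  qed
  have sK: "size K \<le> k" using size_mset_mono[OF KF] Fc(2) by simp
  have E1E: "E1 \<subseteq># E" and E2E: "E2 \<subseteq># E" by (simp_all add: E1_def E2_def)
  define w1 where "w1 = num_comps X E1"
  define w2 where "w2 = num_comps Y E2"
  have b1: "size E1 \<le> k * (card X - w1)" unfolding w1_def by (rule B[OF XV e1 E1E])
  have b2: "size E2 \<le> k * (card Y - w2)" unfolding w2_def by (rule B[OF YV e2 E2E])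
  have w1p: "1 \<le> w1" using num_comps_pos[OF fX] uX by (auto simp: w1_def)
  have w2p: "1 \<le> w2" using num_comps_pos[OF fY] vY by (auto simp: w2_def)
  have w1l: "w1 \<le> card X" using num_comps_le[OF fX] by (simp add: w1_def)
  have w2l: "w2 \<le> card Y" using num_comps_le[OF fY] by (simp add: w2_def)
  define a1 where "a1 = card X - w1"
  define a2 where "a2 = card Y - w2"
  have tot: "size E1 + size E2 + size K = k * (card V - 1)" using sE EE by simp
  have "k * (card V - 1) \<le> k * a1 + k * a2 + k" using tot b1 b2 sK by (simp add: a1_def a2_def)
  also have "\<dots> = k * (a1 + a2 + 1)" by (simp add: algebra_simps)
  finally have hh: "k * (card V - 1) \<le> k * (a1 + a2 + 1)" .
  have "card V - 1 \<le> a1 + a2 + 1" using hh k mult_le_cancel1 by blast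
  then have w12: "w1 = 1" "w2 = 1" using w1p w2p w1l w2l cXY by (simp_all add: a1_def a2_def)
  have a12: "a1 + a2 + 1 = card V - 1" using w12 w1l w2l cXY by (simp add: a1_def a2_def)
  have "k * (a1 + a2) + k = k * (card V - 1)" using a12 by (metis add_mult_distrib2 nat_mult_1_right)
  then have eqs: "size E1 + size E2 + size K = k * a1 + k * a2 + k" using tot by (simp add: algebra_simps)
  have s1: "size E1 = k * (card X - 1)" and s2: "size E2 = k * (card Y - 1)" and sKk: "size K = k"
    using eqs b1 b2 sK w12 by (simp_all add: a1_def a2_def w1_def w2_def)
  have cX: "connected_mg X E1" using connected_iff[OF fX] uX w12 by (auto simp: w1_def)
  have cY: "connected_mg Y E2" using connected_iff[OF fY] vY w12 by (auto simp: w2_def)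
  have m1: "mgraph X E1" and m2: "mgraph Y E2" using edges_in_mgraph fX fY e1 e2 by auto
  have J: "is_edge_join V E k X E1 Y E2"
    unfolding is_edge_join_def using m1 m2 cX cY XY sKk Kc VXY EE by blast
  have B1: "\<And>V' E'. V' \<subseteq> X \<Longrightarrow> edges_in V' E' \<Longrightarrow> E' \<subseteq># E1 \<Longrightarrow> size E' \<le> k * (card V' - num_comps V' E')"
    using B XV E1E by (meson subset_mset.order_trans subset_trans)
  have B2: "\<And>V' E'. V' \<subseteq> Y \<Longrightarrow> edges_in V' E' \<Longrightarrow> E' \<subseteq># E2 \<Longrightarrow> size E' \<le> k * (card V' - num_comps V' E')"
    using B YV E2E by (meson subset_mset.order_trans subset_trans)
  have S1: "is_K1 X E1 \<or> uniformly_dense (real k) X E1" by (rule side_back[OF fX m1 cX s1 B1])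
  have S2: "is_K1 Y E2 \<or> uniformly_dense (real k) Y E2" by (rule side_back[OF fY m2 cY s2 B2])
  show ?thesis using J S1 S2 by blast
qed


theorem theorem4p2:
  fixes k :: nat and V :: "'a set" and E :: "'a set multiset"
  assumes "k > 0"
  shows "in_Fk k V E \<longleftrightarrow>
    (\<exists>V1 E1 V2 E2. is_edge_join V E k V1 E1 V2 E2 \<and>
       (is_K1 V1 E1 \<or> uniformly_dense (real k) V1 E1) \<and>
       (is_K1 V2 E2 \<or> uniformly_dense (real k) V2 E2))"
proof
  assume "in_Fk k V E"
  then show "\<exists>V1 E1 V2 E2. is_edge_join V E k V1 E1 V2 E2 \<and>
       (is_K1 V1 E1 \<or> uniformly_dense (real k) V1 E1) \<and>
       (is_K1 V2 E2 \<or> uniformly_dense (real k) V2 E2)" by (rule F_decomp[OF assms])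
next
  assume "\<exists>V1 E1 V2 E2. is_edge_join V E k V1 E1 V2 E2 \<and>
       (is_K1 V1 E1 \<or> uniformly_dense (real k) V1 E1) \<and>
       (is_K1 V2 E2 \<or> uniformly_dense (real k) V2 E2)"
  then obtain V1 E1 V2 E2 where "is_edge_join V E k V1 E1 V2 E2"
    "is_K1 V1 E1 \<or> uniformly_dense (real k) V1 E1" "is_K1 V2 E2 \<or> uniformly_dense (real k) V2 E2"
    by blast
  then show "in_Fk k V E" by (rule join_in_F[OF assms])
qed

end
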